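(* In the setting below, for fixed $\boldsymbol\lambda\in(0,\infty)^K$, $$\max_{1\le i\le n}\frac1n\Big|\operatorname{Tr}\Big(\mathbf M_i^2\sum_{j\ne i}\frac{z_jz_j^\top}{n}\Big)-\operatorname{Tr}\Big(\mathbf M^2\frac{\mathbf Z^\top\mathbf Z}{n}\Big)\Big|\to0\quad\text{almost surely.}$$
   Context: Setting: $n\to\infty$, $p=p(n)$ features in $K$ fixed disjoint groups $\mathcal G_g$ with $p_g/n\to\gamma_g>0$. $\mathbf Z$ is $n\times p$ with rows $z_i^\top$, where the $z_i$ are i.i.d. vectors with i.i.d. entries of mean $0$, variance $1$ and uniformly bounded $(8+\eta)$-th moments for some $\eta>0$. $\boldsymbol\Sigma$ is a deterministic $p\times p$ covariance matrix with eigenvalues in $[h_1,h_2]$, fixed $h_1,h_2>0$. $\boldsymbol\Lambda$ is the $p\times p$ diagonal matrix with entry $\lambda_g$ at $j\in\mathcal G_g$. $\mathbf M=(\mathbf Z^\top\mathbf Z/n+\boldsymbol\Sigma^{-1/2}\boldsymbol\Lambda\boldsymbol\Sigma^{-1/2})^{-1}$ and $\mathbf M_i=(\mathbf Z^\top\mathbf Z/n+\boldsymbol\Sigma^{-1/2}\boldsymbol\Lambda\boldsymbol\Sigma^{-1/2}-z_iz_i^\top/n)^{-1}$. *)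

theory Defs
  imports "HOL-Probability.Probability" "Jordan_Normal_Form.Char_Poly"
    "Jordan_Normal_Form.Gauss_Jordan_Elimination"
begin

definition mtrace :: "real mat \<Rightarrow> real" where
  "mtrace A = (\<Sum>i<dim_row A. A $$ (i, i))"

definition minv :: "real mat \<Rightarrow> real mat" where
  "minv A = the (mat_inverse A)"

definition sym_mat :: "real mat \<Rightarrow> bool" where
  "sym_mat A \<longleftrightarrow> transpose_mat A = A"

definition pos_def_mat :: "real mat \<Rightarrow> bool" where
  "pos_def_mat A \<longleftrightarrow> square_mat A \<and> sym_mat A \<and>
     (\<forall>v \<in> carrier_vec (dim_row A). v \<noteq> 0\<^sub>v (dim_row A) \<longrightarrow> v \<bullet> (A *\<^sub>v v) > 0)"

definition inv_sqrt_mat :: "real mat \<Rightarrow> real mat" where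
  "inv_sqrt_mat S = (THE R. R \<in> carrier_mat (dim_row S) (dim_row S) \<and> pos_def_mat R
                         \<and> R * R = minv S)"

definition data_mat :: "nat \<Rightarrow> nat \<Rightarrow> (nat \<Rightarrow> nat \<Rightarrow> real) \<Rightarrow> real mat" where
  "data_mat n p x = mat n p (\<lambda>(i, j). x i j)"

definition row_outer :: "real mat \<Rightarrow> nat \<Rightarrow> real mat" where
  "row_outer Z i = mat (dim_col Z) (dim_col Z) (\<lambda>(a, b). Z $$ (i, a) * Z $$ (i, b))"

(* Lambda: diagonal with lambda_g on group g *)
definition Lambda_mat :: "nat \<Rightarrow> nat \<Rightarrow> (nat \<Rightarrow> nat set) \<Rightarrow> (nat \<Rightarrow> real) \<Rightarrow> real mat" where
  "Lambda_mat p K G lam = mat p p (\<lambda>(a, b). if a = b then (\<Sum>g<K. if a \<in> G g then lam g else 0) else 0)"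

end

theory Submission
  imports Defs
begin

no_notation Inner_Product.inner (infix "\<bullet>" 70)
no_notation Finite_Cartesian_Product.vec_nth (infixl "$" 90)

lemma real_sym_eigenvalue:
  fixes A :: "real mat"
  assumes A: "A \<in> carrier_mat n n" and sym: "transpose_mat A = A" and n: "n > 0"
  shows "\<exists>e. eigenvalue A e"
proof -
  let ?AC = "map_mat complex_of_real A"
  have AC: "?AC \<in> carrier_mat n n" using A by auto
  have cp: "char_poly ?AC = map_poly complex_of_real (char_poly A)"
    by (rule of_real_hom.char_poly_hom[OF A])
  have "degree (char_poly ?AC) = n" using degree_monic_char_poly[OF AC] by auto
  hence "\<not> constant (poly (char_poly ?AC))" using n by (simp add: constant_degree)
  then obtain r where r: "poly (char_poly ?AC) r = 0" using fundamental_theorem_of_algebra by blast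
  hence "eigenvalue ?AC r" using eigenvalue_root_char_poly[OF AC] by simp
  then obtain v where v: "eigenvector ?AC v r" unfolding eigenvalue_def by auto
  hence vc: "v \<in> carrier_vec n" and v0: "v \<noteq> 0\<^sub>v n" and ev: "?AC *\<^sub>v v = r \<cdot>\<^sub>v v"
    unfolding eigenvector_def using A by auto
  define N where "N = (\<Sum>i<n. (cmod (v $ i))\<^sup>2)"
  obtain k where k: "k < n" "v $ k \<noteq> 0" using v0 vc by (metis eq_vecI carrier_vecD index_zero_vec)
  have "N \<ge> (cmod (v $ k))\<^sup>2" unfolding N_def
    by (rule member_le_sum, insert k, auto)
  moreover have "(cmod (v $ k))\<^sup>2 > 0" using k by auto
  ultimately have Npos: "N > 0" by linarith
  define s where "s = (\<Sum>i<n. cnj (v $ i) * (?AC *\<^sub>v v) $ i)"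
  have s1: "s = r * of_real N"
  proof -
    have "s = (\<Sum>i<n. r * (cnj (v $ i) * v $ i))" unfolding s_def ev using vc
      by (intro sum.cong, auto)
    also have "\<dots> = r * (\<Sum>i<n. of_real ((cmod (v $ i))\<^sup>2))"
      unfolding sum_distrib_left by (intro sum.cong refl) (simp add: complex_norm_square[symmetric] mult.commute)
    finally show ?thesis unfolding N_def by simp
  qed
  have s2: "s = (\<Sum>i<n. \<Sum>j<n. cnj (v $ i) * of_real (A $$ (i,j)) * v $ j)"
    unfolding s_def using A vc
    by (intro sum.cong, auto simp: mult_mat_vec_def scalar_prod_def sum_distrib_left
        lessThan_atLeast0 mult.assoc)
  have "cnj s = (\<Sum>i<n. \<Sum>j<n. v $ i * of_real (A $$ (i,j)) * cnj (v $ j))"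
    unfolding s2 by simp
  also have "\<dots> = (\<Sum>j<n. \<Sum>i<n. v $ i * of_real (A $$ (i,j)) * cnj (v $ j))"
    by (rule sum.swap)
  also have "\<dots> = s" unfolding s2
  proof (intro sum.cong refl)
    fix i j assume "i \<in> {..<n}" "j \<in> {..<n}"
    hence "A $$ (j,i) = A $$ (i,j)" using A
      by (metis (no_types, lifting) carrier_matD index_transpose_mat(1) lessThan_iff sym)
    thus "v $ j * of_real (A $$ (j, i)) * cnj (v $ i) = cnj (v $ i) * of_real (A $$ (i, j)) * v $ j"
      by simp
  qed
  finally have "cnj s = s" .
  hence "cnj r * of_real N = r * of_real N" unfolding s1 by simp
  hence rr: "cnj r = r" using Npos by simp
  define e where "e = Re r"
  have re: "r = of_real e" unfolding e_def using rr by (metis Reals_cnj_iff complex_is_Real_iff of_real_Re)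
  have "poly (char_poly A) e = 0"
    using r unfolding cp re by simp
  thus ?thesis using eigenvalue_root_char_poly[OF A] by blast
qed

lemma sp_self_ge0: "(v :: real vec) \<bullet> v \<ge> 0"
  unfolding scalar_prod_def by (auto intro: sum_nonneg)

lemma sp_self_eq0: assumes "(v :: real vec) \<in> carrier_vec n" "v \<bullet> v = 0" shows "v = 0\<^sub>v n"
proof (rule eq_vecI)
  fix i assume i: "i < dim_vec (0\<^sub>v n :: real vec)"
  have "(\<Sum>k\<in>{0..<n}. v $ k * v $ k) = 0" using assms unfolding scalar_prod_def by auto
  hence "\<forall>k\<in>{0..<n}. v $ k * v $ k = 0" by (subst (asm) sum_nonneg_eq_0_iff) auto
  thus "v $ i = 0\<^sub>v n $ i" using i by auto
qed (insert assms, auto)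

lemma sp_self_pos: assumes "(v :: real vec) \<in> carrier_vec n" "v \<noteq> 0\<^sub>v n" shows "v \<bullet> v > 0"
  using sp_self_ge0[of v] sp_self_eq0[OF assms(1)] assms(2) by fastforce

lemma smult_mat_vec: assumes "A \<in> carrier_mat nr nc" "v \<in> carrier_vec nc"
  shows "(k \<cdot>\<^sub>m A) *\<^sub>v v = k \<cdot>\<^sub>v (A *\<^sub>v (v :: real vec))"
  using assms by (intro eq_vecI) (auto simp: mult_mat_vec_def scalar_prod_def sum_distrib_left mult.assoc)

lemma transpose_smult: "transpose_mat (k \<cdot>\<^sub>m A) = k \<cdot>\<^sub>m transpose_mat A"
  by (intro eq_matI) auto

lemma mat_eq_vecI: assumes "A \<in> carrier_mat nr nc" "B \<in> carrier_mat nr nc"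
  "\<And>v. v \<in> carrier_vec nc \<Longrightarrow> A *\<^sub>v v = B *\<^sub>v (v :: real vec)"
  shows "A = B"
proof (rule eq_matI)
  fix i j assume i: "i < dim_row B" and j: "j < dim_col B"
  have "col A j = A *\<^sub>v unit_vec nc j"
    using assms(1) j assms(2) by (intro eq_vecI) (auto simp: mult_mat_vec_def)
  moreover have "col B j = B *\<^sub>v unit_vec nc j"
    using assms(2) j by (intro eq_vecI) (auto simp: mult_mat_vec_def)
  ultimately have "col A j = col B j" using assms(3)[of "unit_vec nc j"] by auto
  hence "col A j $ i = col B j $ i" by simp
  thus "A $$ (i, j) = B $$ (i, j)" using i j assms(1,2) by auto
qed (insert assms, auto)

definition outer :: "real vec \<Rightarrow> real vec \<Rightarrow> real mat" where
  "outer x y = mat (dim_vec x) (dim_vec y) (\<lambda>(i,j). x $ i * y $ j)"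

lemma outer_carrier[simp]: "x \<in> carrier_vec n \<Longrightarrow> y \<in> carrier_vec m \<Longrightarrow> outer x y \<in> carrier_mat n m"
  unfolding outer_def by auto

lemma outer_mult_vec: assumes "x \<in> carrier_vec n" "y \<in> carrier_vec m" "z \<in> carrier_vec m"
  shows "outer x y *\<^sub>v z = (y \<bullet> z) \<cdot>\<^sub>v x"
  using assms by (intro eq_vecI) (auto simp: outer_def mult_mat_vec_def scalar_prod_def sum_distrib_right
     intro!: sum.cong)

lemma transpose_outer: "transpose_mat (outer x y) = outer y x"
  unfolding outer_def by (intro eq_matI) auto

lemma householder:
  fixes v :: "real vec"
  assumes v: "v \<in> carrier_vec n" and vv: "v \<bullet> v = 1" and n: "n > 0"
  shows "\<exists>H. H \<in> carrier_mat n n \<and> transpose_mat H = H \<and> H * H = 1\<^sub>m n \<and> H *\<^sub>v unit_vec n 0 = v"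
proof (cases "v = unit_vec n 0")
  case True
  thus ?thesis
    by (intro exI[of _ "1\<^sub>m n"]) (auto simp: one_mult_mat_vec[OF unit_vec_carrier[of n 0]] right_mult_one_mat[OF one_carrier_mat[of n]])
next
  case False
  define x where "x = v - unit_vec n 0"
  have x: "x \<in> carrier_vec n" unfolding x_def using v by auto
  have "x \<noteq> 0\<^sub>v n"
  proof
    assume x0: "x = 0\<^sub>v n"
    have "v = unit_vec n 0"
    proof (rule eq_vecI)
      fix i assume i: "i < dim_vec (unit_vec n 0)"
      hence "x $ i = 0" using x0 by simp
      thus "v $ i = unit_vec n 0 $ i" using v i unfolding x_def by simp
    qed (use v in auto)
    with False show False by simp
  qed
  hence xx: "x \<bullet> x > 0" using sp_self_pos[OF x] by auto
  define c where "c = 2 / (x \<bullet> x)"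
  define H where "H = 1\<^sub>m n - c \<cdot>\<^sub>m outer x x"
  have H: "H \<in> carrier_mat n n" unfolding H_def by (intro minus_carrier_mat smult_carrier_mat outer_carrier x)
  have Hv: "H *\<^sub>v y = y - (c * (x \<bullet> y)) \<cdot>\<^sub>v x" if y: "y \<in> carrier_vec n" for y
  proof -
    have o: "c \<cdot>\<^sub>m outer x x \<in> carrier_mat n n" by (intro smult_carrier_mat outer_carrier x)
    have "H *\<^sub>v y = 1\<^sub>m n *\<^sub>v y - (c \<cdot>\<^sub>m outer x x) *\<^sub>v y"
      unfolding H_def by (rule minus_mult_distrib_mat_vec[OF one_carrier_mat o y])
    also have "\<dots> = y - (c \<cdot>\<^sub>m outer x x) *\<^sub>v y" using y by simp
    also have "(c \<cdot>\<^sub>m outer x x) *\<^sub>v y = c \<cdot>\<^sub>v ((x \<bullet> y) \<cdot>\<^sub>v x)"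
      by (simp add: smult_mat_vec[OF outer_carrier[OF x x] y] outer_mult_vec[OF x x y])
    finally show ?thesis by (simp add: smult_smult_assoc)
  qed
  have "H * H = 1\<^sub>m n"
  proof (rule mat_eq_vecI[of _ n n])
    fix y :: "real vec" assume y: "y \<in> carrier_vec n"
    have xHy: "x \<bullet> (H *\<^sub>v y) = - (x \<bullet> y)"
    proof -
      have "x \<bullet> (H *\<^sub>v y) = x \<bullet> y - (c * (x \<bullet> y)) * (x \<bullet> x)"
        unfolding Hv[OF y] using x y by (simp add: scalar_prod_minus_distrib[of _ n])
      also have "\<dots> = - (x \<bullet> y)" using xx unfolding c_def by (simp add: field_simps)
      finally show ?thesis .
    qed
    have "H * H *\<^sub>v y = H *\<^sub>v (H *\<^sub>v y)" using H y by (simp add: assoc_mult_mat_vec)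
    also have "\<dots> = y" unfolding Hv[OF mult_mat_vec_carrier[OF H y]] xHy unfolding Hv[OF y]
      using x y by (intro eq_vecI) auto
    finally show "H * H *\<^sub>v y = 1\<^sub>m n *\<^sub>v y" using y by simp
  qed (insert H, auto)
  moreover have "transpose_mat H = H" unfolding H_def
    by (simp add: transpose_minus[of _ n n] transpose_smult transpose_outer x)
  moreover have "H *\<^sub>v unit_vec n 0 = v"
  proof -
    have x0: "x \<bullet> unit_vec n 0 = v $ 0 - 1" unfolding x_def using v n by simp
    have e: "unit_vec n 0 \<in> carrier_vec n" by simp
    have "x \<bullet> x = v \<bullet> v - v \<bullet> unit_vec n 0 - (unit_vec n 0 \<bullet> v - unit_vec n 0 \<bullet> unit_vec n 0)"
      unfolding x_def using v e by (simp add: minus_scalar_prod_distrib[of _ n] scalar_prod_minus_distrib[of _ n])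
    hence "x \<bullet> x = v \<bullet> v - 2 * v $ 0 + 1" using v n by simp
    hence "c * (x \<bullet> unit_vec n 0) = -1" unfolding c_def x0 vv using xx vv by (simp add: field_simps)
    hence "H *\<^sub>v unit_vec n 0 = unit_vec n 0 + x" unfolding Hv[OF unit_vec_carrier] using x
      by (intro eq_vecI) auto
    thus ?thesis unfolding x_def using v by (intro eq_vecI) auto
  qed
  ultimately show ?thesis using H by blast
qed

lemma col_unit: fixes A :: "real mat" assumes "A \<in> carrier_mat nr nc" "j < nc"
  shows "A *\<^sub>v unit_vec nc j = col A j"
proof (rule eq_vecI)
  fix i assume "i < dim_vec (col A j)"
  hence i: "i < nr" using assms by simp
  have "Matrix.row A i \<in> carrier_vec nc" by (intro carrier_vecI) (use assms in simp)
  have d: "dim_row A = nr" "dim_col A = nc" using assms by auto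
  thus "(A *\<^sub>v unit_vec nc j) $ i = col A j $ i" using assms i
    by (simp add: mult_mat_vec_def scalar_prod_right_unit[OF \<open>j < nc\<close>] d)
qed (use assms in simp)

lemma mat00_eq: "A \<in> carrier_mat 0 0 \<Longrightarrow> B \<in> carrier_mat 0 0 \<Longrightarrow> A = B"
  by (intro eq_matI) auto

lemma spectral:
  fixes A :: "real mat"
  assumes "A \<in> carrier_mat n n" "transpose_mat A = A"
  shows "\<exists>U D. U \<in> carrier_mat n n \<and> D \<in> carrier_mat n n \<and> diagonal_mat D \<and>
    transpose_mat U * U = 1\<^sub>m n \<and> U * transpose_mat U = 1\<^sub>m n \<and> A = U * D * transpose_mat U"
  using assms
proof (induction n arbitrary: A)
  case 0
  show ?case
    by (intro exI[of _ A] conjI, insert 0, auto simp: diagonal_mat_def intro: mat00_eq)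
next
  case (Suc m A)
  have A: "A \<in> carrier_mat (Suc m) (Suc m)" and As: "transpose_mat A = A" using Suc by auto
  obtain e where "eigenvalue A e" using real_sym_eigenvalue[OF A As] by auto
  then obtain v0 where "eigenvector A v0 e" unfolding eigenvalue_def by auto
  hence v0: "v0 \<in> carrier_vec (Suc m)" "v0 \<noteq> 0\<^sub>v (Suc m)" and ev0: "A *\<^sub>v v0 = e \<cdot>\<^sub>v v0"
    unfolding eigenvector_def using A by auto
  have pos: "v0 \<bullet> v0 > 0" using sp_self_pos[OF v0] .
  define v where "v = (1 / sqrt (v0 \<bullet> v0)) \<cdot>\<^sub>v v0"
  have v: "v \<in> carrier_vec (Suc m)" unfolding v_def using v0 by auto
  have vv: "v \<bullet> v = 1" unfolding v_def using v0 pos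
    by (simp add: power2_eq_square[symmetric])
  have ev: "A *\<^sub>v v = e \<cdot>\<^sub>v v" unfolding v_def
    using mult_mat_vec[OF A v0(1)] ev0 by (simp add: smult_smult_assoc mult.commute)
  obtain H where H: "H \<in> carrier_mat (Suc m) (Suc m)" and Hs: "transpose_mat H = H"
    and HH: "H * H = 1\<^sub>m (Suc m)" and He: "H *\<^sub>v unit_vec (Suc m) 0 = v"
    using householder[OF v vv] by auto
  define A' where "A' = H * A * H"
  have A': "A' \<in> carrier_mat (Suc m) (Suc m)" unfolding A'_def using H A by auto
  have A's: "transpose_mat A' = A'"
  proof -
    have "transpose_mat A' = transpose_mat H * transpose_mat (H * A)" unfolding A'_def
      by (rule transpose_mult[OF mult_carrier_mat[OF H A] H])
    also have "transpose_mat (H * A) = transpose_mat A * transpose_mat H" by (rule transpose_mult[OF H A])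
    finally show ?thesis unfolding Hs As A'_def using H A by simp
  qed
  have Hv: "H *\<^sub>v v = unit_vec (Suc m) 0" unfolding He[symmetric]
    using H HH by (simp flip: assoc_mult_mat_vec[OF H H])
  have A'e: "A' *\<^sub>v unit_vec (Suc m) 0 = e \<cdot>\<^sub>v unit_vec (Suc m) 0"
  proof -
    have "A' *\<^sub>v unit_vec (Suc m) 0 = (H * A) *\<^sub>v (H *\<^sub>v unit_vec (Suc m) 0)" unfolding A'_def
      by (rule assoc_mult_mat_vec[OF mult_carrier_mat[OF H A] H unit_vec_carrier])
    also have "\<dots> = H *\<^sub>v (A *\<^sub>v v)" unfolding He by (rule assoc_mult_mat_vec[OF H A v])
    also have "\<dots> = e \<cdot>\<^sub>v (H *\<^sub>v v)" unfolding ev by (rule mult_mat_vec[OF H v])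
    finally show ?thesis unfolding Hv .
  qed
  have col0: "A' $$ (i, 0) = (if i = 0 then e else 0)" if i: "i < Suc m" for i
  proof -
    have "A' $$ (i, 0) = col A' 0 $ i" using A' i by simp
    also have "col A' 0 = A' *\<^sub>v unit_vec (Suc m) 0" using col_unit[OF A', of 0] by simp
    also have "\<dots> = e \<cdot>\<^sub>v unit_vec (Suc m) 0" by (rule A'e)
    finally show ?thesis using i by simp
  qed
  have row0: "A' $$ (0, j) = (if j = 0 then e else 0)" if j: "j < Suc m" for j
  proof -
    have "A' $$ (0, j) = transpose_mat A' $$ (j, 0)" using A' j by simp
    thus ?thesis unfolding A's using col0[OF j] by simp
  qed
  define A3 where "A3 = mat m m (\<lambda>(i,j). A' $$ (Suc i, Suc j))"
  have A3: "A3 \<in> carrier_mat m m" unfolding A3_def by simp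
  have A3s: "transpose_mat A3 = A3" unfolding A3_def
  proof (rule eq_matI)
    fix i j assume "i < dim_row (mat m m (\<lambda>(i, j). A' $$ (Suc i, Suc j)))"
      "j < dim_col (mat m m (\<lambda>(i, j). A' $$ (Suc i, Suc j)))"
    hence ij: "i < m" "j < m" by auto
    have "A' $$ (Suc j, Suc i) = transpose_mat A' $$ (Suc i, Suc j)" using A' ij by simp
    thus "transpose_mat (mat m m (\<lambda>(i, j). A' $$ (Suc i, Suc j))) $$ (i, j) =
        mat m m (\<lambda>(i, j). A' $$ (Suc i, Suc j)) $$ (i, j)" unfolding A's using ij by simp
  qed auto
  obtain U3 D3 where U3: "U3 \<in> carrier_mat m m" and D3: "D3 \<in> carrier_mat m m" and dD3: "diagonal_mat D3"
    and U3o: "transpose_mat U3 * U3 = 1\<^sub>m m" and U3o': "U3 * transpose_mat U3 = 1\<^sub>m m"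
    and A3eq: "A3 = U3 * D3 * transpose_mat U3"
    using Suc.IH[OF A3 A3s] by auto
  define E where "E = mat 1 1 (\<lambda>_. e)"
  have E: "E \<in> carrier_mat 1 1" unfolding E_def by simp
  have A'blk: "A' = four_block_mat E (0\<^sub>m 1 m) (0\<^sub>m m 1) A3"
  proof (rule eq_matI)
    fix i j assume "i < dim_row (four_block_mat E (0\<^sub>m 1 m) (0\<^sub>m m 1) A3)"
      "j < dim_col (four_block_mat E (0\<^sub>m 1 m) (0\<^sub>m m 1) A3)"
    hence ij: "i < Suc m" "j < Suc m" using E A3 by auto
    show "A' $$ (i, j) = four_block_mat E (0\<^sub>m 1 m) (0\<^sub>m m 1) A3 $$ (i, j)"
    proof (cases "i = 0")
      case True thus ?thesis using ij E A3 row0[OF ij(2)] by (auto simp: E_def)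
    next
      case False
      show ?thesis
      proof (cases "j = 0")
        case True thus ?thesis using ij E A3 col0[OF ij(1)] \<open>i \<noteq> 0\<close> by (auto simp: E_def)
      next
        case False
        then obtain i' j' where "i = Suc i'" "j = Suc j'" using \<open>i \<noteq> 0\<close> by (metis not0_implies_Suc)
        thus ?thesis using ij E A3 by (auto simp: A3_def)
      qed
    qed
  qed (insert A' E A3, auto)
  define U1 where "U1 = four_block_mat (1\<^sub>m 1) (0\<^sub>m 1 m) (0\<^sub>m m 1) U3"
  define D1 where "D1 = four_block_mat E (0\<^sub>m 1 m) (0\<^sub>m m 1) D3"
  have U1: "U1 \<in> carrier_mat (Suc m) (Suc m)" unfolding U1_def using U3 by auto
  have U1T: "transpose_mat U1 \<in> carrier_mat (Suc m) (Suc m)" using U1 by simp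
  have D1: "D1 \<in> carrier_mat (Suc m) (Suc m)" unfolding D1_def using D3 E by auto
  have U1t: "transpose_mat U1 = four_block_mat (1\<^sub>m 1) (0\<^sub>m 1 m) (0\<^sub>m m 1) (transpose_mat U3)"
    unfolding U1_def by (subst transpose_four_block_mat[of _ 1 1 _ m _ m U3]) (use U3 in auto)
  have U1o: "transpose_mat U1 * U1 = 1\<^sub>m (Suc m)"
    unfolding U1t unfolding U1_def
    by (subst mult_four_block_mat[of _ 1 1 _ m _ m _ _ 1 _ m]) (use U3 U3o four_block_one_mat[of 1 m] in auto)
  have U1o': "U1 * transpose_mat U1 = 1\<^sub>m (Suc m)"
    unfolding U1t unfolding U1_def
    by (subst mult_four_block_mat[of _ 1 1 _ m _ m _ _ 1 _ m]) (use U3 U3o' four_block_one_mat[of 1 m] in auto)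
  have UDU: "U1 * D1 * transpose_mat U1 = A'"
  proof -
    have UD: "U1 * D1 = four_block_mat E (0\<^sub>m 1 m) (0\<^sub>m m 1) (U3 * D3)"
      unfolding U1_def D1_def
      by (subst mult_four_block_mat[of _ 1 1 _ m _ m _ _ 1 _ m]) (use U3 D3 E in auto)
    have "U1 * D1 * transpose_mat U1 = four_block_mat E (0\<^sub>m 1 m) (0\<^sub>m m 1) (U3 * D3 * transpose_mat U3)"
      unfolding U1t UD
      by (subst mult_four_block_mat[of _ 1 1 _ m _ m _ _ 1 _ m]) (use U3 D3 E in auto)
    thus ?thesis unfolding A'blk A3eq .
  qed
  have dD1: "diagonal_mat D1" using dD3 D3 E unfolding D1_def diagonal_mat_def
    by (auto simp: E_def)
  define U where "U = H * U1"
  have U: "U \<in> carrier_mat (Suc m) (Suc m)" unfolding U_def using H U1 by auto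
  have Ut: "transpose_mat U = transpose_mat U1 * H" unfolding U_def
    using transpose_mult[OF H U1] Hs by simp
  have "transpose_mat U * U = 1\<^sub>m (Suc m)"
  proof -
    have "transpose_mat U1 * H * (H * U1) = transpose_mat U1 * ((H * H) * U1)" 
      by (subst assoc_mult_mat[OF transpose_carrier_mat[THEN iffD2, OF U1] H mult_carrier_mat[OF H U1]])
         (simp add: assoc_mult_mat[OF H H U1])
    hence "transpose_mat U1 * H * (H * U1) = 1\<^sub>m (Suc m)" unfolding HH using U1 U1o by simp
    thus ?thesis unfolding Ut unfolding U_def .
  qed
  moreover have "U * transpose_mat U = 1\<^sub>m (Suc m)"
  proof -
    have "H * U1 * (transpose_mat U1 * H) = H * ((U1 * transpose_mat U1) * H)" using H U1
      by (subst assoc_mult_mat[OF H U1 mult_carrier_mat[OF transpose_carrier_mat[THEN iffD2, OF U1] H]])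
         (simp add: assoc_mult_mat[OF U1 transpose_carrier_mat[THEN iffD2, OF U1] H])
    hence "H * U1 * (transpose_mat U1 * H) = 1\<^sub>m (Suc m)" unfolding U1o' using H HH by simp
    thus ?thesis unfolding Ut unfolding U_def .
  qed
  moreover have "A = U * D1 * transpose_mat U"
  proof -
    have "U * D1 * transpose_mat U = H * (U1 * D1 * transpose_mat U1) * H"
      unfolding Ut unfolding U_def using H U1 D1 by (simp add: assoc_mult_mat[of _ "Suc m" "Suc m" _ "Suc m" _ "Suc m"])
    also have "\<dots> = (H * H) * A * (H * H)" unfolding UDU A'_def using H A by (simp add: assoc_mult_mat[of _ "Suc m" "Suc m" _ "Suc m" _ "Suc m"])
    finally show ?thesis unfolding HH using A by simp
  qed
  ultimately show ?case using U D1 dD1 by blast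
qed

lemma diag_mult_mat: fixes D M :: "real mat"
  assumes D: "D \<in> carrier_mat n n" "diagonal_mat D" and M: "M \<in> carrier_mat n m" and ij: "i < n" "j < m"
  shows "(D * M) $$ (i,j) = D $$ (i,i) * M $$ (i,j)"
proof -
  have "(D * M) $$ (i,j) = (\<Sum>k\<in>{0..<n}. D $$ (i,k) * M $$ (k,j))"
    using D M ij by (simp add: scalar_prod_def)
  also have "\<dots> = (\<Sum>k\<in>{0..<n}. if k = i then D $$ (i,i) * M $$ (i,j) else 0)"
    using D ij unfolding diagonal_mat_def by (intro sum.cong) auto
  also have "\<dots> = D $$ (i,i) * M $$ (i,j)" using ij by simp
  finally show ?thesis .
qed

lemma diag_mult_vec: fixes D :: "real mat"
  assumes D: "D \<in> carrier_mat n n" "diagonal_mat D" and y: "y \<in> carrier_vec n" and k: "k < n"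
  shows "(D *\<^sub>v y) $ k = D $$ (k,k) * y $ k"
proof -
  have "(D *\<^sub>v y) $ k = (\<Sum>i\<in>{0..<n}. D $$ (k,i) * y $ i)"
    using D y k by (simp add: mult_mat_vec_def scalar_prod_def)
  also have "\<dots> = (\<Sum>i\<in>{0..<n}. if i = k then D $$ (k,k) * y $ k else 0)"
    using D k unfolding diagonal_mat_def by (intro sum.cong) auto
  also have "\<dots> = D $$ (k,k) * y $ k" using k by simp
  finally show ?thesis .
qed

lemma diag_quad: fixes D :: "real mat"
  assumes D: "D \<in> carrier_mat n n" "diagonal_mat D" and y: "y \<in> carrier_vec n"
  shows "y \<bullet> (D *\<^sub>v y) = (\<Sum>k\<in>{0..<n}. D $$ (k,k) * (y $ k)\<^sup>2)"
proof -
  have "y \<bullet> (D *\<^sub>v y) = (\<Sum>k\<in>{0..<n}. y $ k * (D *\<^sub>v y) $ k)" unfolding scalar_prod_def using D by simp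
  also have "\<dots> = (\<Sum>k\<in>{0..<n}. D $$ (k,k) * (y $ k)\<^sup>2)"
    by (intro sum.cong refl) (simp del: index_mult_mat_vec add: diag_mult_vec[OF D y] power2_eq_square)
  finally show ?thesis .
qed

lemma diag_norm: fixes D :: "real mat"
  assumes D: "D \<in> carrier_mat n n" "diagonal_mat D" and y: "y \<in> carrier_vec n"
  shows "(D *\<^sub>v y) \<bullet> (D *\<^sub>v y) = (\<Sum>k\<in>{0..<n}. (D $$ (k,k))\<^sup>2 * (y $ k)\<^sup>2)"
proof -
  have "(D *\<^sub>v y) \<bullet> (D *\<^sub>v y) = (\<Sum>k\<in>{0..<n}. (D *\<^sub>v y) $ k * (D *\<^sub>v y) $ k)" unfolding scalar_prod_def using D by simp
  also have "\<dots> = (\<Sum>k\<in>{0..<n}. (D $$ (k,k))\<^sup>2 * (y $ k)\<^sup>2)"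
    by (intro sum.cong refl) (simp del: index_mult_mat_vec add: diag_mult_vec[OF D y] power2_eq_square)
  finally show ?thesis .
qed

lemma sp_self_sum: "(y :: real vec) \<in> carrier_vec n \<Longrightarrow> y \<bullet> y = (\<Sum>k\<in>{0..<n}. (y $ k)\<^sup>2)"
  unfolding scalar_prod_def by (simp add: power2_eq_square)

lemma sym_sp: fixes R :: "real mat"
  assumes R: "R \<in> carrier_mat n n" "transpose_mat R = R" and w: "w \<in> carrier_vec n" and x: "x \<in> carrier_vec n"
  shows "w \<bullet> (R *\<^sub>v x) = (R *\<^sub>v w) \<bullet> x"
  using transpose_vec_mult_scalar[OF R(1) x w] R(2) by simp

lemma spectral_eig:
  fixes A :: "real mat"
  assumes A: "A \<in> carrier_mat n n" and As: "transpose_mat A = A"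
  shows "\<exists>U D. U \<in> carrier_mat n n \<and> D \<in> carrier_mat n n \<and> diagonal_mat D \<and>
    transpose_mat U * U = 1\<^sub>m n \<and> U * transpose_mat U = 1\<^sub>m n \<and> A = U * D * transpose_mat U \<and>
    (\<forall>k<n. eigenvalue A (D $$ (k,k)))"
proof -
  obtain U D where U: "U \<in> carrier_mat n n" and D: "D \<in> carrier_mat n n" and dD: "diagonal_mat D"
    and Uo: "transpose_mat U * U = 1\<^sub>m n" and Uo': "U * transpose_mat U = 1\<^sub>m n"
    and AU: "A = U * D * transpose_mat U"
    using spectral[OF A As] by auto
  have UT: "transpose_mat U \<in> carrier_mat n n" using U by simp
  have "eigenvalue A (D $$ (k,k))" if k: "k < n" for k
  proof -
    let ?e = "unit_vec n k :: real vec"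
    let ?w = "U *\<^sub>v ?e"
    have w: "?w \<in> carrier_vec n" using U by simp
    have "transpose_mat U *\<^sub>v ?w = ?e"
      using U Uo by (simp flip: assoc_mult_mat_vec[OF UT U unit_vec_carrier])
    have w0: "?w \<noteq> 0\<^sub>v n"
    proof
      assume "?w = 0\<^sub>v n"
      hence "?e = transpose_mat U *\<^sub>v 0\<^sub>v n" using \<open>transpose_mat U *\<^sub>v ?w = ?e\<close> by simp
      also have "\<dots> = 0\<^sub>v n" using UT by (intro eq_vecI) (auto simp: mult_mat_vec_def)
      finally have e0: "?e = 0\<^sub>v n" .
      show False using arg_cong[OF e0, of "\<lambda>v. v $ k"] k by simp
    qed
    have De: "D *\<^sub>v ?e = D $$ (k,k) \<cdot>\<^sub>v ?e"
      using D dD k by (intro eq_vecI) (auto simp del: index_mult_mat_vec simp: diag_mult_vec[OF D dD unit_vec_carrier])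
    have "A *\<^sub>v ?w = U *\<^sub>v (D *\<^sub>v (transpose_mat U *\<^sub>v ?w))"
      unfolding AU using U D UT by (simp add: assoc_mult_mat_vec[of _ n n _ n])
    also have "\<dots> = D $$ (k,k) \<cdot>\<^sub>v ?w" unfolding \<open>transpose_mat U *\<^sub>v ?w = ?e\<close> De
      using U by (simp add: mult_mat_vec)
    finally show ?thesis unfolding eigenvalue_def eigenvector_def using w w0 A by auto
  qed
  thus ?thesis using U D dD Uo Uo' AU by blast
qed

lemma sym_eig_zero: fixes A :: "real mat"
  assumes A: "A \<in> carrier_mat n n" and As: "transpose_mat A = A" and ev: "\<And>e. eigenvalue A e \<Longrightarrow> e = 0"
  shows "A = 0\<^sub>m n n"
proof -
  obtain U D where U: "U \<in> carrier_mat n n" and D: "D \<in> carrier_mat n n" and dD: "diagonal_mat D"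
    and AU: "A = U * D * transpose_mat U" and eig: "\<forall>k<n. eigenvalue A (D $$ (k,k))"
    using spectral_eig[OF A As] by blast
  have "D = 0\<^sub>m n n"
  proof (rule eq_matI)
    fix i j assume "i < dim_row (0\<^sub>m n n :: real mat)" "j < dim_col (0\<^sub>m n n :: real mat)"
    hence ij: "i < n" "j < n" by auto
    show "D $$ (i, j) = 0\<^sub>m n n $$ (i, j)"
    proof (cases "i = j")
      case True thus ?thesis using eig ev ij by auto
    next
      case False thus ?thesis using dD D ij unfolding diagonal_mat_def by auto
    qed
  qed (use D in auto)
  thus ?thesis unfolding AU using U by simp
qed

lemma root_unique: fixes R1 R2 :: "real mat"
  assumes R1: "R1 \<in> carrier_mat n n" "transpose_mat R1 = R1" "\<And>v. v \<in> carrier_vec n \<Longrightarrow> v \<noteq> 0\<^sub>v n \<Longrightarrow> v \<bullet> (R1 *\<^sub>v v) > 0"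
  and R2: "R2 \<in> carrier_mat n n" "transpose_mat R2 = R2" "\<And>v. v \<in> carrier_vec n \<Longrightarrow> v \<noteq> 0\<^sub>v n \<Longrightarrow> v \<bullet> (R2 *\<^sub>v v) > 0"
  and eq: "R1 * R1 = R2 * R2"
  shows "R1 = R2"
proof -
  define D where "D = R1 - R2"
  have D: "D \<in> carrier_mat n n" unfolding D_def using R2 by (intro minus_carrier_mat)
  have Ds: "transpose_mat D = D" unfolding D_def using R1 R2 by (simp add: transpose_minus[of _ n n])
  have "e = 0" if ev: "eigenvalue D e" for e
  proof -
    from ev obtain w where "eigenvector D w e" unfolding eigenvalue_def by blast
    hence w: "w \<in> carrier_vec n" "w \<noteq> 0\<^sub>v n" and Dw: "D *\<^sub>v w = e \<cdot>\<^sub>v w"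
      unfolding eigenvector_def using D by auto
    define a where "a = R1 *\<^sub>v w"
    define b where "b = R2 *\<^sub>v w"
    have a: "a \<in> carrier_vec n" and b: "b \<in> carrier_vec n" unfolding a_def b_def using R1 R2 w by auto
    have Dw': "e \<cdot>\<^sub>v w = a - b" unfolding Dw[symmetric] D_def a_def b_def
      by (rule minus_mult_distrib_mat_vec[OF R1(1) R2(1) w(1)])
    have ab: "R1 *\<^sub>v a = R2 *\<^sub>v b" unfolding a_def b_def
      using arg_cong[OF eq, of "\<lambda>M. M *\<^sub>v w"] R1 R2 w by simp
    have q1: "e * (w \<bullet> a) = a \<bullet> a - a \<bullet> b"
    proof -
      have "e * (w \<bullet> a) = w \<bullet> (R1 *\<^sub>v (e \<cdot>\<^sub>v w))" unfolding a_def using R1 w by (simp add: mult_mat_vec)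
      also have "\<dots> = w \<bullet> (R1 *\<^sub>v a) - w \<bullet> (R1 *\<^sub>v b)" unfolding Dw'
        using R1 a b w by (simp add: mult_minus_distrib_mat_vec scalar_prod_minus_distrib[of _ n])
      also have "\<dots> = a \<bullet> a - a \<bullet> b" using sym_sp[OF R1(1,2) w(1) a] sym_sp[OF R1(1,2) w(1) b]
        unfolding a_def by simp
      finally show ?thesis .
    qed
    have q2: "e * (w \<bullet> b) = b \<bullet> a - b \<bullet> b"
    proof -
      have "e * (w \<bullet> b) = w \<bullet> (R2 *\<^sub>v (e \<cdot>\<^sub>v w))" unfolding b_def using R2 w by (simp add: mult_mat_vec)
      also have "\<dots> = w \<bullet> (R2 *\<^sub>v a) - w \<bullet> (R2 *\<^sub>v b)" unfolding Dw'
        using R2 a b w by (simp add: mult_minus_distrib_mat_vec scalar_prod_minus_distrib[of _ n])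
      also have "\<dots> = b \<bullet> a - b \<bullet> b" using sym_sp[OF R2(1,2) w(1) a] sym_sp[OF R2(1,2) w(1) b]
        unfolding b_def by simp
      finally show ?thesis .
    qed
    have "a \<bullet> a = b \<bullet> b"
    proof -
      have "a \<bullet> a = w \<bullet> (R1 *\<^sub>v a)" using sym_sp[OF R1(1,2) w(1) a] unfolding a_def by simp
      also have "\<dots> = w \<bullet> (R2 *\<^sub>v b)" unfolding ab ..
      also have "\<dots> = b \<bullet> b" using sym_sp[OF R2(1,2) w(1) b] unfolding b_def by simp
      finally show ?thesis .
    qed
    moreover have "a \<bullet> b = b \<bullet> a" by (rule comm_scalar_prod[OF a b])
    ultimately have "e * (w \<bullet> a + w \<bullet> b) = 0" using q1 q2 by (simp add: distrib_left)
    moreover have "w \<bullet> a + w \<bullet> b > 0" using R1(3)[OF w] R2(3)[OF w] unfolding a_def b_def by simp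
    ultimately show "e = 0" by simp
  qed
  hence "D = 0\<^sub>m n n" using sym_eig_zero[OF D Ds] by blast
  show ?thesis
  proof (rule eq_matI)
    fix i j assume "i < dim_row R2" "j < dim_col R2"
    hence ij: "i < n" "j < n" using R2 by auto
    have "D $$ (i,j) = 0" using \<open>D = 0\<^sub>m n n\<close> ij by simp
    thus "R1 $$ (i,j) = R2 $$ (i,j)" unfolding D_def using R1 R2 ij by simp
  qed (use R1 R2 in auto)
qed

lemma minv_eq: fixes A X :: "real mat"
  assumes A: "A \<in> carrier_mat n n" and X: "X \<in> carrier_mat n n" and AX: "A * X = 1\<^sub>m n"
  shows "minv A = X"
proof -
  have "det A * det X = 1" using det_mult[OF A X] AX det_one by metis
  hence "det A \<noteq> 0" by auto
  hence "A \<in> Units (ring_mat TYPE(real) n n)" by (rule det_non_zero_imp_unit[OF A])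
  hence "mat_inverse A \<noteq> None" using mat_inverse(1)[OF A, where b=n] by blast
  then obtain B where B: "mat_inverse A = Some B" by auto
  from mat_inverse(2)[OF A B] have BA: "B * A = 1\<^sub>m n" and Bc: "B \<in> carrier_mat n n" by auto
  have "X = (B * A) * X" using X BA by simp
  also have "\<dots> = B" using assoc_mult_mat[OF Bc A X] AX Bc by simp
  finally show ?thesis unfolding minv_def B by simp
qed


lemma pos_sum_sq: fixes y :: "real vec" and d :: "nat \<Rightarrow> real"
  assumes y: "y \<in> carrier_vec n" "y \<noteq> 0\<^sub>v n" and d: "\<And>k. k < n \<Longrightarrow> d k > 0"
  shows "(\<Sum>k\<in>{0..<n}. d k * (y $ k)\<^sup>2) > 0"
proof -
  obtain k where k: "k < n" "y $ k \<noteq> 0" using y by (metis eq_vecI carrier_vecD index_zero_vec)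
  have "(\<Sum>k\<in>{0..<n}. d k * (y $ k)\<^sup>2) \<ge> d k * (y $ k)\<^sup>2"
    by (rule member_le_sum) (use k d in \<open>auto intro!: mult_nonneg_nonneg simp: less_imp_le\<close>)
  moreover have "d k * (y $ k)\<^sup>2 > 0" using k d by auto
  ultimately show ?thesis by linarith
qed

lemma Sigma_S: fixes Sig :: "real mat"
  assumes Sig: "Sig \<in> carrier_mat p p" "transpose_mat Sig = Sig" and h1: "h1 > 0"
    and ev: "\<And>e. eigenvalue Sig e \<Longrightarrow> h1 \<le> e \<and> e \<le> h2"
  shows "inv_sqrt_mat Sig \<in> carrier_mat p p \<and> transpose_mat (inv_sqrt_mat Sig) = inv_sqrt_mat Sig \<and>
    (\<forall>v \<in> carrier_vec p. v \<bullet> v / h2 \<le> (inv_sqrt_mat Sig *\<^sub>v v) \<bullet> (inv_sqrt_mat Sig *\<^sub>v v) \<and>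
       (inv_sqrt_mat Sig *\<^sub>v v) \<bullet> (inv_sqrt_mat Sig *\<^sub>v v) \<le> v \<bullet> v / h1)"
proof -
  obtain U D where U: "U \<in> carrier_mat p p" and D: "D \<in> carrier_mat p p" and dD: "diagonal_mat D"
    and Uo: "transpose_mat U * U = 1\<^sub>m p" and Uo': "U * transpose_mat U = 1\<^sub>m p"
    and SU: "Sig = U * D * transpose_mat U" and eig: "\<forall>k<p. eigenvalue Sig (D $$ (k,k))"
    using spectral_eig[OF Sig(1,2)] by blast
  have UT: "transpose_mat U \<in> carrier_mat p p" using U by simp
  have dpos: "D $$ (k,k) > 0" and dlo: "h1 \<le> D $$ (k,k)" and dhi: "D $$ (k,k) \<le> h2" if "k < p" for k
    using ev[of "D $$ (k,k)"] eig that h1 by auto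
  define Di where "Di = mat p p (\<lambda>(i,j). if i = j then 1 / D $$ (i,i) else 0)"
  define Dh where "Dh = mat p p (\<lambda>(i,j). if i = j then 1 / sqrt (D $$ (i,i)) else 0)"
  have Di: "Di \<in> carrier_mat p p" "diagonal_mat Di" unfolding Di_def diagonal_mat_def by auto
  have Dh: "Dh \<in> carrier_mat p p" "diagonal_mat Dh" unfolding Dh_def diagonal_mat_def by auto
  have DDi: "D * Di = 1\<^sub>m p"
  proof (rule eq_matI)
    fix i j assume "i < dim_row (1\<^sub>m p :: real mat)" "j < dim_col (1\<^sub>m p :: real mat)"
    hence ij: "i < p" "j < p" by auto
    have "(D * Di) $$ (i,j) = D $$ (i,i) * Di $$ (i,j)" by (rule diag_mult_mat[OF D dD Di(1) ij])
    also have "\<dots> = 1\<^sub>m p $$ (i,j)" using ij dpos[OF ij(1)] unfolding Di_def by (cases "i = j") auto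
    finally show "(D * Di) $$ (i,j) = 1\<^sub>m p $$ (i,j)" .
  qed (use D Di in auto)
  have DhDh: "Dh * Dh = Di"
  proof (rule eq_matI)
    fix i j assume "i < dim_row Di" "j < dim_col Di"
    hence ij: "i < p" "j < p" using Di by auto
    have "(Dh * Dh) $$ (i,j) = Dh $$ (i,i) * Dh $$ (i,j)" by (rule diag_mult_mat[OF Dh Dh(1) ij])
    also have "\<dots> = Di $$ (i,j)" using ij dpos[OF ij(1)] unfolding Di_def Dh_def
      by (cases "i = j") (auto simp: real_sqrt_mult[symmetric])
    finally show "(Dh * Dh) $$ (i,j) = Di $$ (i,j)" .
  qed (use Dh Di in auto)
  have DhT: "transpose_mat Dh = Dh" unfolding Dh_def by (rule eq_matI) auto
  define X where "X = U * Di * transpose_mat U"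
  have X: "X \<in> carrier_mat p p" unfolding X_def using U Di by auto
  have "Sig * X = U * (D * (transpose_mat U * U) * Di) * transpose_mat U"
    unfolding SU X_def using U D Di UT by (simp add: assoc_mult_mat[of _ p p _ p _ p])
  also have "\<dots> = 1\<^sub>m p" unfolding Uo using D DDi Uo' U by simp
  finally have minvS: "minv Sig = X" by (rule minv_eq[OF Sig(1) X])
  define R where "R = U * Dh * transpose_mat U"
  have R: "R \<in> carrier_mat p p" unfolding R_def using U Dh by auto
  have RR: "R * R = X"
  proof -
    have "R * R = U * (Dh * (transpose_mat U * U) * Dh) * transpose_mat U"
      unfolding R_def using U Dh UT by (simp add: assoc_mult_mat[of _ p p _ p _ p])
    also have "\<dots> = X" unfolding Uo X_def using Dh DhDh U Di by (simp add: assoc_mult_mat[of _ p p _ p _ p])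
    finally show ?thesis .
  qed
  have RT: "transpose_mat R = R"
  proof -
    have "transpose_mat R = transpose_mat (transpose_mat U) * transpose_mat (U * Dh)" unfolding R_def
      by (rule transpose_mult[OF mult_carrier_mat[OF U Dh(1)] UT])
    also have "transpose_mat (U * Dh) = transpose_mat Dh * transpose_mat U" by (rule transpose_mult[OF U Dh(1)])
    finally show ?thesis unfolding DhT R_def using U Dh UT by (simp add: assoc_mult_mat[of _ p p _ p _ p])
  qed
  have quadU: "v \<bullet> (U *\<^sub>v (M *\<^sub>v (transpose_mat U *\<^sub>v v))) = (transpose_mat U *\<^sub>v v) \<bullet> (M *\<^sub>v (transpose_mat U *\<^sub>v v))"
    if v: "v \<in> carrier_vec p" and M: "M \<in> carrier_mat p p" for v M
    using transpose_vec_mult_scalar[OF U _ v, of "M *\<^sub>v (transpose_mat U *\<^sub>v v)"] M UT v by simp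
  have Rpd: "v \<bullet> (R *\<^sub>v v) > 0" if v: "v \<in> carrier_vec p" "v \<noteq> 0\<^sub>v p" for v
  proof -
    define y where "y = transpose_mat U *\<^sub>v v"
    have y: "y \<in> carrier_vec p" unfolding y_def using UT v by simp
    have "U *\<^sub>v y = v" unfolding y_def using U UT v Uo' by (simp flip: assoc_mult_mat_vec[OF U UT v(1)])
    hence "y \<noteq> 0\<^sub>v p" using v U by auto
    have "v \<bullet> (R *\<^sub>v v) = y \<bullet> (Dh *\<^sub>v y)"
      unfolding R_def y_def using quadU[OF v(1) Dh(1)] U Dh UT v by (simp add: assoc_mult_mat_vec[of _ p p _ p])
    also have "\<dots> = (\<Sum>k\<in>{0..<p}. Dh $$ (k,k) * (y $ k)\<^sup>2)" by (rule diag_quad[OF Dh y])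
    also have "\<dots> > 0" by (rule pos_sum_sq[OF y \<open>y \<noteq> 0\<^sub>v p\<close>]) (use dpos in \<open>auto simp: Dh_def\<close>)
    finally show ?thesis .
  qed
  have dimS: "dim_row Sig = p" using Sig by simp
  have P: "R \<in> carrier_mat p p \<and> pos_def_mat R \<and> R * R = minv Sig"
    using R RT Rpd RR minvS unfolding pos_def_mat_def sym_mat_def square_mat.simps by auto
  have "inv_sqrt_mat Sig = R" unfolding inv_sqrt_mat_def dimS
  proof (rule the_equality)
    fix R' assume "R' \<in> carrier_mat p p \<and> pos_def_mat R' \<and> R' * R' = minv Sig"
    hence R': "R' \<in> carrier_mat p p" "transpose_mat R' = R'"
      "\<And>v. v \<in> carrier_vec p \<Longrightarrow> v \<noteq> 0\<^sub>v p \<Longrightarrow> v \<bullet> (R' *\<^sub>v v) > 0" and R'R': "R' * R' = minv Sig"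
      unfolding pos_def_mat_def sym_mat_def by auto
    have "R' * R' = R * R" unfolding R'R' RR minvS ..
    thus "R' = R" using root_unique[of R' p R] R' R RT Rpd by blast
  qed (use P in auto)
  moreover have "v \<bullet> v / h2 \<le> (R *\<^sub>v v) \<bullet> (R *\<^sub>v v) \<and> (R *\<^sub>v v) \<bullet> (R *\<^sub>v v) \<le> v \<bullet> v / h1"
    if v: "v \<in> carrier_vec p" for v
  proof -
    define y where "y = transpose_mat U *\<^sub>v v"
    have y: "y \<in> carrier_vec p" unfolding y_def using UT v by simp
    have "(R *\<^sub>v v) \<bullet> (R *\<^sub>v v) = v \<bullet> (R *\<^sub>v (R *\<^sub>v v))" using sym_sp[OF R RT v, of "R *\<^sub>v v"] R v by simp
    also have "\<dots> = v \<bullet> (X *\<^sub>v v)" unfolding RR[symmetric] using R v by simp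
    also have "\<dots> = y \<bullet> (Di *\<^sub>v y)" unfolding X_def y_def using quadU[OF v Di(1)] U Di UT v by (simp add: assoc_mult_mat_vec[of _ p p _ p])
    also have "\<dots> = (\<Sum>k\<in>{0..<p}. Di $$ (k,k) * (y $ k)\<^sup>2)" by (rule diag_quad[OF Di y])
    finally have e1: "(R *\<^sub>v v) \<bullet> (R *\<^sub>v v) = (\<Sum>k\<in>{0..<p}. (y $ k)\<^sup>2 / D $$ (k,k))"
      unfolding Di_def by simp
    have "v \<bullet> v = y \<bullet> (1\<^sub>m p *\<^sub>v y)" unfolding y_def using quadU[OF v one_carrier_mat] U UT v Uo'
      by (simp flip: assoc_mult_mat_vec[OF U UT v])
    also have "\<dots> = (\<Sum>k\<in>{0..<p}. (y $ k)\<^sup>2)" using y by (simp add: sp_self_sum)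
    finally have e2: "v \<bullet> v = (\<Sum>k\<in>{0..<p}. (y $ k)\<^sup>2)" .
    have "v \<bullet> v / h2 = (\<Sum>k\<in>{0..<p}. (y $ k)\<^sup>2 / h2)" unfolding e2 by (simp add: sum_divide_distrib)
    also have "\<dots> \<le> (\<Sum>k\<in>{0..<p}. (y $ k)\<^sup>2 / D $$ (k,k))"
      by (rule sum_mono) (use dpos dhi in \<open>auto intro!: divide_left_mono mult_pos_pos intro: less_le_trans[OF dpos dhi]\<close>)
    finally have l: "v \<bullet> v / h2 \<le> (R *\<^sub>v v) \<bullet> (R *\<^sub>v v)" unfolding e1 .
    have "(\<Sum>k\<in>{0..<p}. (y $ k)\<^sup>2 / D $$ (k,k)) \<le> (\<Sum>k\<in>{0..<p}. (y $ k)\<^sup>2 / h1)"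
      by (rule sum_mono) (use dpos dlo h1 in \<open>auto intro!: divide_left_mono mult_pos_pos\<close>)
    also have "\<dots> = v \<bullet> v / h1" unfolding e2 by (simp add: sum_divide_distrib)
    finally have u: "(R *\<^sub>v v) \<bullet> (R *\<^sub>v v) \<le> v \<bullet> v / h1" unfolding e1 .
    show ?thesis using l u by simp
  qed
  ultimately show ?thesis using R RT by auto
qed

definition nrm :: "real vec \<Rightarrow> real" where "nrm v = sqrt (v \<bullet> v)"

lemma nrm_ge0: "nrm v \<ge> 0" unfolding nrm_def using sp_self_ge0[of v] by simp
lemma nrm_sq: "(nrm v)\<^sup>2 = v \<bullet> v" unfolding nrm_def using sp_self_ge0[of v] by simp

lemma cauchy_schwarz: assumes "x \<in> carrier_vec n" "y \<in> carrier_vec n"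
  shows "\<bar>x \<bullet> y\<bar> \<le> nrm x * nrm y"
proof -
  have "(x \<bullet> y)\<^sup>2 \<le> (x \<bullet> x) * (y \<bullet> y)"
    using Cauchy_Schwarz_ineq_sum[of "\<lambda>i. x $ i" "\<lambda>i. y $ i" "{0..<n}"] assms
    by (simp add: scalar_prod_def power2_eq_square)
  hence "sqrt ((x \<bullet> y)\<^sup>2) \<le> sqrt ((x \<bullet> x) * (y \<bullet> y))" by (rule real_sqrt_le_mono)
  thus ?thesis unfolding nrm_def by (simp add: real_sqrt_mult)
qed

lemma mtrace_add: "A \<in> carrier_mat n n \<Longrightarrow> B \<in> carrier_mat n n \<Longrightarrow> mtrace (A + B) = mtrace A + mtrace B"
  unfolding mtrace_def by (simp add: sum.distrib)

lemma mtrace_minus: "A \<in> carrier_mat n n \<Longrightarrow> B \<in> carrier_mat n n \<Longrightarrow> mtrace (A - B) = mtrace A - mtrace B"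
  unfolding mtrace_def by (simp add: sum_subtractf)

lemma mtrace_smult: "A \<in> carrier_mat n n \<Longrightarrow> mtrace (k \<cdot>\<^sub>m A) = k * mtrace A"
  unfolding mtrace_def by (auto simp: sum_distrib_left intro!: sum.cong)

lemma mtrace_outer: "x \<in> carrier_vec n \<Longrightarrow> y \<in> carrier_vec n \<Longrightarrow> mtrace (outer x y) = x \<bullet> y"
  unfolding mtrace_def outer_def scalar_prod_def by (simp add: lessThan_atLeast0)

lemma mult_outer_left: assumes X: "X \<in> carrier_mat n m" and x: "x \<in> carrier_vec m" and y: "y \<in> carrier_vec k"
  shows "X * outer x y = outer (X *\<^sub>v x) y"
  using X x y by (intro eq_matI) (auto simp: outer_def scalar_prod_def mult_mat_vec_def sum_distrib_right
    mult.assoc intro!: sum.cong)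

lemma mult_outer_right: assumes X: "X \<in> carrier_mat m k" and x: "x \<in> carrier_vec n" and y: "y \<in> carrier_vec m"
  shows "outer x y * X = outer x (transpose_mat X *\<^sub>v y)"
  using X x y by (intro eq_matI) (auto simp: outer_def scalar_prod_def mult_mat_vec_def sum_distrib_left
    mult.assoc mult.left_commute intro!: sum.cong)

lemma smult_outer: "k \<cdot>\<^sub>m outer x y = outer (k \<cdot>\<^sub>v x) y"
  unfolding outer_def by (intro eq_matI) auto

lemma pd_inverse: fixes A :: "real mat"
  assumes A: "A \<in> carrier_mat n n" and pd: "\<And>v. v \<in> carrier_vec n \<Longrightarrow> v \<noteq> 0\<^sub>v n \<Longrightarrow> v \<bullet> (A *\<^sub>v v) > 0"
  shows "minv A \<in> carrier_mat n n \<and> A * minv A = 1\<^sub>m n \<and> minv A * A = 1\<^sub>m n"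
proof -
  have "det A \<noteq> 0"
  proof
    assume "det A = 0"
    then obtain v where v: "v \<in> carrier_vec n" "v \<noteq> 0\<^sub>v n" "A *\<^sub>v v = 0\<^sub>v n"
      using det_0_iff_vec_prod_zero[OF A] by blast
    have "v \<bullet> (A *\<^sub>v v) = 0" using v by simp
    thus False using pd[OF v(1,2)] by simp
  qed
  hence "A \<in> Units (ring_mat TYPE(real) n n)" by (rule det_non_zero_imp_unit[OF A])
  hence "mat_inverse A \<noteq> None" using mat_inverse(1)[OF A, where b=n] by blast
  then obtain B where B: "mat_inverse A = Some B" by auto
  from mat_inverse(2)[OF A B] show ?thesis unfolding minv_def B by auto
qed

lemma inv_sym: fixes A B :: "real mat"
  assumes A: "A \<in> carrier_mat n n" "transpose_mat A = A" and B: "B \<in> carrier_mat n n" and AB: "A * B = 1\<^sub>m n"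
    and BA: "B * A = 1\<^sub>m n"
  shows "transpose_mat B = B"
proof -
  have "transpose_mat (A * B) = 1\<^sub>m n" unfolding AB by simp
  hence BtA: "transpose_mat B * A = 1\<^sub>m n" using transpose_mult[OF A(1) B] A(2) by simp
  have "transpose_mat B = transpose_mat B * (A * B)" unfolding AB using B by simp
  also have "\<dots> = (transpose_mat B * A) * B" using A B by simp
  finally show ?thesis unfolding BtA using B by simp
qed

lemma inv_norm: fixes A B :: "real mat"
  assumes A: "A \<in> carrier_mat n n" and B: "B \<in> carrier_mat n n" and AB: "A * B = 1\<^sub>m n"
    and pd: "\<And>v. v \<in> carrier_vec n \<Longrightarrow> v \<bullet> (A *\<^sub>v v) \<ge> c * (v \<bullet> v)" and c: "c > 0"
    and x: "x \<in> carrier_vec n"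
  shows "nrm (B *\<^sub>v x) \<le> nrm x / c"
proof -
  define y where "y = B *\<^sub>v x"
  have y: "y \<in> carrier_vec n" unfolding y_def using B x by simp
  have Ay: "A *\<^sub>v y = x" unfolding y_def using A B x AB by (simp flip: assoc_mult_mat_vec[OF A B x])
  have "c * (nrm y)\<^sup>2 \<le> y \<bullet> x" using pd[OF y] unfolding Ay nrm_sq .
  also have "\<dots> \<le> nrm y * nrm x" using cauchy_schwarz[OF y x] by simp
  finally have "c * (nrm y)\<^sup>2 \<le> nrm y * nrm x" .
  hence "c * nrm y \<le> nrm x" using nrm_ge0[of y] nrm_ge0[of x]
    by (cases "nrm y = 0") (auto simp: power2_eq_square)
  thus ?thesis unfolding y_def using c by (simp add: field_simps)
qed

declare minus_carrier_mat[simp]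

lemma key_bound:
  fixes Bi L Ai A B :: "real mat" and u :: "real vec"
  assumes Bi: "Bi \<in> carrier_mat p p" "transpose_mat Bi = Bi" "\<And>v. v \<in> carrier_vec p \<Longrightarrow> v \<bullet> (Bi *\<^sub>v v) \<ge> 0"
  and L: "L \<in> carrier_mat p p" "transpose_mat L = L" "\<And>v. v \<in> carrier_vec p \<Longrightarrow> v \<bullet> (L *\<^sub>v v) \<ge> c * (v \<bullet> v)"
     "\<And>v. v \<in> carrier_vec p \<Longrightarrow> nrm (L *\<^sub>v v) \<le> C * nrm v"
  and c: "c > 0" and C: "C \<ge> 0" and u: "u \<in> carrier_vec p"
  and Ai: "Ai = Bi + L" and A: "A = Ai + outer u u" and B: "B = Bi + outer u u"
  shows "\<bar>mtrace (minv Ai * minv Ai * Bi) - mtrace (minv A * minv A * B)\<bar> \<le> 1 / c + 2 * C / c\<^sup>2"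
proof -
  have U: "outer u u \<in> carrier_mat p p" using u by simp
  have Aic: "Ai \<in> carrier_mat p p" unfolding Ai using Bi L by simp
  have Ac: "A \<in> carrier_mat p p" unfolding A using Aic U by simp
  have Bc: "B \<in> carrier_mat p p" unfolding B using Bi U by simp
  have Aiv: "Ai *\<^sub>v v = Bi *\<^sub>v v + L *\<^sub>v v" if "v \<in> carrier_vec p" for v
    unfolding Ai using Bi L that by (simp add: add_mult_distrib_mat_vec)
  have Av: "A *\<^sub>v v = Ai *\<^sub>v v + (u \<bullet> v) \<cdot>\<^sub>v u" if "v \<in> carrier_vec p" for v
    unfolding A using Aic U that u by (simp add: add_mult_distrib_mat_vec outer_mult_vec)
  have Bv: "B *\<^sub>v v = A *\<^sub>v v - L *\<^sub>v v" if v: "v \<in> carrier_vec p" for v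
  proof -
    have "B *\<^sub>v v = Bi *\<^sub>v v + (u \<bullet> v) \<cdot>\<^sub>v u" unfolding B using Bi U v u by (simp add: add_mult_distrib_mat_vec outer_mult_vec)
    thus ?thesis unfolding Av[OF v] Aiv[OF v] using Bi L v u by (intro eq_vecI) auto
  qed
  have qAi: "v \<bullet> (Ai *\<^sub>v v) \<ge> c * (v \<bullet> v)" if v: "v \<in> carrier_vec p" for v
  proof -
    have "v \<bullet> (Ai *\<^sub>v v) = v \<bullet> (Bi *\<^sub>v v) + v \<bullet> (L *\<^sub>v v)" unfolding Aiv[OF v]
      using Bi L v by (simp add: scalar_prod_add_distrib[of _ p])
    thus ?thesis using Bi(3)[OF v] L(3)[OF v] by simp
  qed
  have qA: "v \<bullet> (A *\<^sub>v v) \<ge> c * (v \<bullet> v)" if v: "v \<in> carrier_vec p" for v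
  proof -
    have "v \<bullet> (A *\<^sub>v v) = v \<bullet> (Ai *\<^sub>v v) + (u \<bullet> v) * (v \<bullet> u)" unfolding Av[OF v]
      using Aic v u by (simp add: scalar_prod_add_distrib[of _ p])
    also have "(u \<bullet> v) * (v \<bullet> u) = (u \<bullet> v)\<^sup>2" using comm_scalar_prod[OF u v] by (simp add: power2_eq_square)
    finally show ?thesis using qAi[OF v] by (simp add: add_increasing2)
  qed
  have pdAi: "v \<bullet> (Ai *\<^sub>v v) > 0" if "v \<in> carrier_vec p" "v \<noteq> 0\<^sub>v p" for v
    using qAi[OF that(1)] sp_self_pos[OF that] c by (meson less_le_trans mult_pos_pos)
  have pdA: "v \<bullet> (A *\<^sub>v v) > 0" if "v \<in> carrier_vec p" "v \<noteq> 0\<^sub>v p" for v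
    using qA[OF that(1)] sp_self_pos[OF that] c by (meson less_le_trans mult_pos_pos)
  define N where "N = minv Ai"
  define M where "M = minv A"
  have N: "N \<in> carrier_mat p p" "Ai * N = 1\<^sub>m p" "N * Ai = 1\<^sub>m p" using pd_inverse[OF Aic pdAi] unfolding N_def by auto
  have M: "M \<in> carrier_mat p p" "A * M = 1\<^sub>m p" "M * A = 1\<^sub>m p" using pd_inverse[OF Ac pdA] unfolding M_def by auto
  have AiT: "transpose_mat Ai = Ai" unfolding Ai using Bi L by (simp add: transpose_add)
  have AT: "transpose_mat A = A" unfolding A using Aic U AiT by (simp add: transpose_add transpose_outer)
  have NT: "transpose_mat N = N" by (rule inv_sym[OF Aic AiT N])
  have MT: "transpose_mat M = M" by (rule inv_sym[OF Ac AT M])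
  have AiN: "Ai *\<^sub>v (N *\<^sub>v y) = y" if "y \<in> carrier_vec p" for y
    using N that Aic by (simp flip: assoc_mult_mat_vec[OF Aic N(1) that])
  have NAi: "N *\<^sub>v (Ai *\<^sub>v y) = y" if "y \<in> carrier_vec p" for y
    using N that Aic by (simp flip: assoc_mult_mat_vec[OF N(1) Aic that])
  have MA: "M *\<^sub>v (A *\<^sub>v y) = y" if "y \<in> carrier_vec p" for y
    using M that Ac by (simp flip: assoc_mult_mat_vec[OF M(1) Ac that])
  define w where "w = N *\<^sub>v u"
  have w: "w \<in> carrier_vec p" unfolding w_def using N u by simp
  define q where "q = u \<bullet> w"
  have Aiw: "Ai *\<^sub>v w = u" unfolding w_def by (rule AiN[OF u])
  have wq: "c * (w \<bullet> w) \<le> q"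
  proof -
    have "q = w \<bullet> (Ai *\<^sub>v w)" unfolding q_def Aiw using comm_scalar_prod[OF u w] by simp
    thus ?thesis using qAi[OF w] by simp
  qed
  have q0: "q \<ge> 0" using wq c sp_self_ge0[of w] by (meson mult_nonneg_nonneg less_imp_le order_trans)
  define k where "k = 1 / (1 + q)"
  have k: "k > 0" "k * (1 + q) = 1" unfolding k_def using q0 by auto
  have uN: "u \<bullet> (N *\<^sub>v y) = w \<bullet> y" if y: "y \<in> carrier_vec p" for y
    using sym_sp[OF N(1) NT u y] unfolding w_def .
  define E where "E = k \<cdot>\<^sub>m outer w w"
  have Ec: "E \<in> carrier_mat p p" unfolding E_def using w by simp
  have Ev: "E *\<^sub>v y = (k * (w \<bullet> y)) \<cdot>\<^sub>v w" if y: "y \<in> carrier_vec p" for y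
    unfolding E_def smult_mat_vec[OF outer_carrier[OF w w] y] outer_mult_vec[OF w w y] by (simp add: smult_smult_assoc)
  have SM: "M = N - E"
  proof -
    have NE: "N - E \<in> carrier_mat p p" using Ec by (rule minus_carrier_mat)
    have "A * (N - E) = 1\<^sub>m p"
    proof (rule mat_eq_vecI[of _ p p])
      fix y :: "real vec" assume y: "y \<in> carrier_vec p"
      have Aw: "A *\<^sub>v w = (1 + q) \<cdot>\<^sub>v u" unfolding Av[OF w] Aiw q_def using u by (intro eq_vecI) (auto simp: algebra_simps)
      have "A * (N - E) *\<^sub>v y = A *\<^sub>v (N *\<^sub>v y) - A *\<^sub>v (E *\<^sub>v y)" using Ac N Ec y
        by (simp add: assoc_mult_mat_vec[of _ p p _ p] minus_mult_distrib_mat_vec[of _ p p] mult_minus_distrib_mat_vec[of _ p p])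
      also have "A *\<^sub>v (E *\<^sub>v y) = (k * (w \<bullet> y) * (1 + q)) \<cdot>\<^sub>v u" unfolding Ev[OF y]
        using Ac w by (simp add: mult_mat_vec Aw smult_smult_assoc)
      also have "\<dots> = (w \<bullet> y) \<cdot>\<^sub>v u"
      proof -
        have "k * (w \<bullet> y) * (1 + q) = (k * (1 + q)) * (w \<bullet> y)" by (simp only: mult_ac)
        also have "\<dots> = w \<bullet> y" by (simp only: k(2) mult_1_left)
        finally have e: "k * (w \<bullet> y) * (1 + q) = w \<bullet> y" .
        show ?thesis by (simp only: e)
      qed
      also have "A *\<^sub>v (N *\<^sub>v y) = y + (w \<bullet> y) \<cdot>\<^sub>v u" unfolding Av[OF mult_mat_vec_carrier[OF N(1) y]] AiN[OF y] uN[OF y] ..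
      finally show "A * (N - E) *\<^sub>v y = 1\<^sub>m p *\<^sub>v y" using y u by (intro eq_vecI) auto
    qed (use Ac NE in auto)
    thus ?thesis unfolding M_def by (rule minv_eq[OF Ac NE])
  qed
  have id1: "N * N * Bi = N - N * N * L"
  proof (rule mat_eq_vecI[of _ p p])
    fix y :: "real vec" assume y: "y \<in> carrier_vec p"
    have "Bi *\<^sub>v y = Ai *\<^sub>v y - L *\<^sub>v y" unfolding Aiv[OF y] using Bi L y by (intro eq_vecI) auto
    hence "N *\<^sub>v (Bi *\<^sub>v y) = y - N *\<^sub>v (L *\<^sub>v y)" using N Aic L y NAi[OF y]
      by (simp add: assoc_mult_mat_vec[of _ p p _ p] mult_minus_distrib_mat_vec[of _ p p])
    thus "N * N * Bi *\<^sub>v y = (N - N * N * L) *\<^sub>v y" using N L Bi y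
      by (simp add: assoc_mult_mat_vec[of _ p p _ p] minus_mult_distrib_mat_vec[of _ p p] mult_minus_distrib_mat_vec[of _ p p])
  qed (use N Bi L in auto)
  have id2: "M * M * B = M - M * M * L"
  proof (rule mat_eq_vecI[of _ p p])
    fix y :: "real vec" assume y: "y \<in> carrier_vec p"
    have "M *\<^sub>v (B *\<^sub>v y) = y - M *\<^sub>v (L *\<^sub>v y)" unfolding Bv[OF y] using M Ac L y MA[OF y]
      by (simp add: assoc_mult_mat_vec[of _ p p _ p] mult_minus_distrib_mat_vec[of _ p p])
    thus "M * M * B *\<^sub>v y = (M - M * M * L) *\<^sub>v y" using M L Bc y
      by (simp add: assoc_mult_mat_vec[of _ p p _ p] minus_mult_distrib_mat_vec[of _ p p] mult_minus_distrib_mat_vec[of _ p p])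
  qed (use M Bc L in auto)
  have id3: "N * N * L - M * M * L = E * N * L + M * E * L"
  proof (rule mat_eq_vecI[of _ p p])
    fix y :: "real vec" assume y: "y \<in> carrier_vec p"
    define z where "z = L *\<^sub>v y"
    have z: "z \<in> carrier_vec p" unfolding z_def using L y by simp
    have EN: "E = N - M" unfolding SM using N Ec by (intro eq_matI) auto
    have "(N * N * L - M * M * L) *\<^sub>v y = N *\<^sub>v (N *\<^sub>v z) - M *\<^sub>v (M *\<^sub>v z)"
      unfolding z_def using N M L y by (simp add: assoc_mult_mat_vec[of _ p p _ p] minus_mult_distrib_mat_vec[of _ p p])
    moreover have "(E * N * L + M * E * L) *\<^sub>v y = E *\<^sub>v (N *\<^sub>v z) + M *\<^sub>v (E *\<^sub>v z)"
      unfolding z_def using N M L y Ec by (simp add: assoc_mult_mat_vec[of _ p p _ p] add_mult_distrib_mat_vec[of _ p p])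
    moreover have "E *\<^sub>v (N *\<^sub>v z) = N *\<^sub>v (N *\<^sub>v z) - M *\<^sub>v (N *\<^sub>v z)" unfolding EN
      using N M z by (simp add: assoc_mult_mat_vec[of _ p p _ p] minus_mult_distrib_mat_vec[of _ p p])
    moreover have "M *\<^sub>v (E *\<^sub>v z) = M *\<^sub>v (N *\<^sub>v z) - M *\<^sub>v (M *\<^sub>v z)" unfolding EN
      using N M z by (simp add: assoc_mult_mat_vec[of _ p p _ p] minus_mult_distrib_mat_vec[of _ p p] mult_minus_distrib_mat_vec[of _ p p])
    ultimately show "(N * N * L - M * M * L) *\<^sub>v y = (E * N * L + M * E * L) *\<^sub>v y"
      using N M z by (intro eq_vecI) auto
  qed (use N M L Ec in auto)
  have trE: "mtrace E = k * (w \<bullet> w)" unfolding E_def using w by (simp add: mtrace_smult[of _ p] mtrace_outer)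
  have ENL: "E * N * L = k \<cdot>\<^sub>m outer w (L *\<^sub>v (N *\<^sub>v w))"
  proof -
    have "E * N = k \<cdot>\<^sub>m outer w (N *\<^sub>v w)" unfolding E_def using w N
      by (simp add: mult_smult_assoc_mat[of _ p p] mult_outer_right[OF N(1) w w] NT)
    thus ?thesis using w N L by (simp add: mult_smult_assoc_mat[of _ p p] mult_outer_right[OF L(1) w] L(2))
  qed
  have MEL: "M * E * L = k \<cdot>\<^sub>m outer (M *\<^sub>v w) (L *\<^sub>v w)"
  proof -
    have "M * E = k \<cdot>\<^sub>m outer (M *\<^sub>v w) w"
      unfolding E_def mult_smult_distrib[OF M(1) outer_carrier[OF w w]] mult_outer_left[OF M(1) w w] ..
    thus ?thesis using w M L by (simp add: mult_smult_assoc_mat[of _ p p] mult_outer_right[OF L(1) mult_mat_vec_carrier[OF M(1) w] w] L(2))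
  qed
  have trENL: "mtrace (E * N * L) = k * (w \<bullet> (L *\<^sub>v (N *\<^sub>v w)))" unfolding ENL
    using w N L by (simp add: mtrace_smult[of _ p] mtrace_outer[of _ p])
  have trMEL: "mtrace (M * E * L) = k * ((M *\<^sub>v w) \<bullet> (L *\<^sub>v w))" unfolding MEL
    using w M L by (simp add: mtrace_smult[of _ p] mtrace_outer[of _ p])
  have diff: "mtrace (N * N * Bi) - mtrace (M * M * B) =
      mtrace E - mtrace (E * N * L) - mtrace (M * E * L)"
  proof -
    have c1: "N * N * L \<in> carrier_mat p p" "M * M * L \<in> carrier_mat p p"
      "E * N * L \<in> carrier_mat p p" "M * E * L \<in> carrier_mat p p" using N M L Ec by auto
    have "mtrace (N * N * Bi) - mtrace (M * M * B) = (mtrace N - mtrace (N * N * L)) - (mtrace M - mtrace (M * M * L))"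
      unfolding id1 id2 using N M c1 by (simp add: mtrace_minus[of _ p])
    also have "\<dots> = (mtrace N - mtrace M) - (mtrace (N * N * L) - mtrace (M * M * L))" by simp
    also have "mtrace (N * N * L) - mtrace (M * M * L) = mtrace (E * N * L) + mtrace (M * E * L)"
      using mtrace_minus[OF c1(1,2)] mtrace_add[OF c1(3,4)] id3 by simp
    also have "mtrace N - mtrace M = mtrace E" unfolding SM using N Ec
      by (simp add: mtrace_minus[of _ p])
    finally show ?thesis by simp
  qed
  define s where "s = w \<bullet> w"
  have s0: "s \<ge> 0" unfolding s_def by (rule sp_self_ge0)
  have ns: "nrm w * nrm w = s" unfolding s_def using nrm_sq[of w] by (simp add: power2_eq_square)
  have b1: "\<bar>w \<bullet> (L *\<^sub>v (N *\<^sub>v w))\<bar> \<le> C * s / c"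
  proof -
    have Nw: "N *\<^sub>v w \<in> carrier_vec p" using N w by simp
    have "\<bar>w \<bullet> (L *\<^sub>v (N *\<^sub>v w))\<bar> \<le> nrm w * nrm (L *\<^sub>v (N *\<^sub>v w))"
      using cauchy_schwarz[OF w, of "L *\<^sub>v (N *\<^sub>v w)"] L Nw by simp
    also have "\<dots> \<le> nrm w * (C * nrm (N *\<^sub>v w))"
      by (rule mult_left_mono[OF L(4)[OF Nw] nrm_ge0])
    also have "\<dots> \<le> nrm w * (C * (nrm w / c))"
      by (intro mult_left_mono[OF _ nrm_ge0] mult_left_mono[OF _ C] inv_norm[OF Aic N(1,2) qAi c w])
    also have "\<dots> = C * s / c" using ns by (simp add: field_simps)
    finally show ?thesis .
  qed
  have b2: "\<bar>(M *\<^sub>v w) \<bullet> (L *\<^sub>v w)\<bar> \<le> C * s / c"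
  proof -
    have Mw: "M *\<^sub>v w \<in> carrier_vec p" using M w by simp
    have "\<bar>(M *\<^sub>v w) \<bullet> (L *\<^sub>v w)\<bar> \<le> nrm (M *\<^sub>v w) * nrm (L *\<^sub>v w)"
      using cauchy_schwarz[OF Mw, of "L *\<^sub>v w"] L w by simp
    also have "\<dots> \<le> (nrm w / c) * (C * nrm w)"
      by (intro mult_mono inv_norm[OF Ac M(1,2) qA c w] L(4)[OF w] nrm_ge0) (use c nrm_ge0[of w] in \<open>auto intro: divide_nonneg_pos\<close>)
    also have "\<dots> = C * s / c" using ns by (simp add: field_simps)
    finally show ?thesis .
  qed
  have ks: "k * s \<le> 1 / c"
  proof -
    have "c * s \<le> 1 + q" using wq q0 unfolding s_def by simp
    hence "c * s * k \<le> (1 + q) * k" using k by (intro mult_right_mono) auto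
    hence "c * (k * s) \<le> 1" using k by (simp add: algebra_simps)
    thus ?thesis using c by (simp add: field_simps)
  qed
  have tri: "\<bar>X - Y - Z\<bar> \<le> \<bar>X\<bar> + \<bar>Y\<bar> + \<bar>Z\<bar>" for X Y Z :: real by arith
  have ka: "\<bar>k * a\<bar> \<le> k * (C * s / c)" if "\<bar>a\<bar> \<le> C * s / c" for a
    using mult_left_mono[OF that less_imp_le[OF k(1)]] k(1) by (simp add: abs_mult)
  have "\<bar>mtrace (N * N * Bi) - mtrace (M * M * B)\<bar> \<le> \<bar>k * s\<bar> + \<bar>k * (w \<bullet> (L *\<^sub>v (N *\<^sub>v w)))\<bar> + \<bar>k * ((M *\<^sub>v w) \<bullet> (L *\<^sub>v w))\<bar>"
    unfolding diff trE trENL trMEL s_def[symmetric] by (rule tri)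
  also have "\<dots> \<le> k * s + k * (C * s / c) + k * (C * s / c)"
  proof -
    have "\<bar>k * s\<bar> = k * s" using k(1) s0 by simp
    thus ?thesis using ka[OF b1] ka[OF b2] by linarith
  qed
  also have "\<dots> = (k * s) * (1 + 2 * C / c)" by (simp add: field_simps)
  also have "\<dots> \<le> (1 / c) * (1 + 2 * C / c)"
    by (rule mult_right_mono[OF ks]) (use C c in simp)
  also have "\<dots> = 1 / c + 2 * C / c\<^sup>2" using c by (simp add: field_simps power2_eq_square)
  finally show ?thesis unfolding N_def M_def .
qed

lemma row_outer_eq: assumes Z: "Z \<in> carrier_mat n p" and i: "i < n"
  shows "row_outer Z i = outer (Matrix.row Z i) (Matrix.row Z i)"
  using Z i unfolding row_outer_def outer_def by (intro eq_matI) auto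

lemma bound_n:
  fixes Z Sig Lam :: "real mat"
  assumes n: "n > 0" and Z: "Z \<in> carrier_mat n p"
    and Sig: "Sig \<in> carrier_mat p p" "transpose_mat Sig = Sig" and h1: "h1 > 0" and h2: "h2 > 0"
    and ev: "\<And>e. eigenvalue Sig e \<Longrightarrow> h1 \<le> e \<and> e \<le> h2"
    and Lam: "Lam \<in> carrier_mat p p" "diagonal_mat Lam"
    and lb: "\<And>a. a < p \<Longrightarrow> lmin \<le> Lam $$ (a,a) \<and> Lam $$ (a,a) \<le> lmax" and lmin: "lmin > 0" and lmax: "lmax \<ge> 0"
    and i: "i < n"
  shows "\<bar>mtrace (minv ((1 / real n) \<cdot>\<^sub>m (transpose_mat Z * Z) + inv_sqrt_mat Sig * Lam * inv_sqrt_mat Sig - (1 / real n) \<cdot>\<^sub>m row_outer Z i)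
              * minv ((1 / real n) \<cdot>\<^sub>m (transpose_mat Z * Z) + inv_sqrt_mat Sig * Lam * inv_sqrt_mat Sig - (1 / real n) \<cdot>\<^sub>m row_outer Z i)
              * ((1 / real n) \<cdot>\<^sub>m (transpose_mat Z * Z - row_outer Z i)))
         - mtrace (minv ((1 / real n) \<cdot>\<^sub>m (transpose_mat Z * Z) + inv_sqrt_mat Sig * Lam * inv_sqrt_mat Sig)
              * minv ((1 / real n) \<cdot>\<^sub>m (transpose_mat Z * Z) + inv_sqrt_mat Sig * Lam * inv_sqrt_mat Sig)
              * ((1 / real n) \<cdot>\<^sub>m (transpose_mat Z * Z)))\<bar>
      \<le> 1 / (lmin / h2) + 2 * (lmax / h1) / (lmin / h2)\<^sup>2"
proof -
  define S where "S = inv_sqrt_mat Sig"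
  have SS: "S \<in> carrier_mat p p" "transpose_mat S = S"
    "\<And>v. v \<in> carrier_vec p \<Longrightarrow> v \<bullet> v / h2 \<le> (S *\<^sub>v v) \<bullet> (S *\<^sub>v v) \<and> (S *\<^sub>v v) \<bullet> (S *\<^sub>v v) \<le> v \<bullet> v / h1"
    using Sigma_S[OF Sig h1 ev] unfolding S_def by auto
  define L where "L = S * Lam * S"
  have Lc: "L \<in> carrier_mat p p" unfolding L_def using SS Lam by simp
  have LamT: "transpose_mat Lam = Lam"
  proof (rule eq_matI)
    fix a b assume "a < dim_row Lam" "b < dim_col Lam"
    hence ab: "a < p" "b < p" using Lam by auto
    show "transpose_mat Lam $$ (a, b) = Lam $$ (a, b)"
      using Lam ab unfolding diagonal_mat_def by (cases "a = b") auto
  qed (use Lam in auto)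
  have LT: "transpose_mat L = L"
  proof -
    have "transpose_mat L = transpose_mat S * transpose_mat (S * Lam)" unfolding L_def
      by (rule transpose_mult[OF mult_carrier_mat[OF SS(1) Lam(1)] SS(1)])
    also have "transpose_mat (S * Lam) = transpose_mat Lam * transpose_mat S" by (rule transpose_mult[OF SS(1) Lam(1)])
    finally show ?thesis unfolding LamT SS(2) L_def using SS Lam by (simp add: assoc_mult_mat[of _ p p _ p _ p])
  qed
  have Lv: "L *\<^sub>v v = S *\<^sub>v (Lam *\<^sub>v (S *\<^sub>v v))" if v: "v \<in> carrier_vec p" for v
    unfolding L_def using SS Lam v by (simp add: assoc_mult_mat_vec[of _ p p _ p])
  have Lq: "v \<bullet> (L *\<^sub>v v) \<ge> (lmin / h2) * (v \<bullet> v)" if v: "v \<in> carrier_vec p" for v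
  proof -
    define y where "y = S *\<^sub>v v"
    have y: "y \<in> carrier_vec p" unfolding y_def using SS v by simp
    have "v \<bullet> (L *\<^sub>v v) = y \<bullet> (Lam *\<^sub>v y)" unfolding Lv[OF v] y_def
      using sym_sp[OF SS(1,2) v, of "Lam *\<^sub>v (S *\<^sub>v v)"] Lam SS v by simp
    also have "\<dots> = (\<Sum>k\<in>{0..<p}. Lam $$ (k,k) * (y $ k)\<^sup>2)" by (rule diag_quad[OF Lam y])
    also have "\<dots> \<ge> (\<Sum>k\<in>{0..<p}. lmin * (y $ k)\<^sup>2)"
      by (rule sum_mono) (use lb in \<open>auto intro!: mult_right_mono\<close>)
    finally have "v \<bullet> (L *\<^sub>v v) \<ge> lmin * (y \<bullet> y)" using y by (simp add: sp_self_sum sum_distrib_left)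
    moreover have "lmin * (y \<bullet> y) \<ge> lmin * (v \<bullet> v / h2)" using SS(3)[OF v] lmin unfolding y_def
      by (intro mult_left_mono) auto
    ultimately show ?thesis by simp
  qed
  have Ln: "nrm (L *\<^sub>v v) \<le> (lmax / h1) * nrm v" if v: "v \<in> carrier_vec p" for v
  proof -
    define y where "y = S *\<^sub>v v"
    have y: "y \<in> carrier_vec p" unfolding y_def using SS v by simp
    have Ly: "Lam *\<^sub>v y \<in> carrier_vec p" using Lam y by simp
    have LvS: "L *\<^sub>v v = S *\<^sub>v (Lam *\<^sub>v y)" unfolding Lv[OF v] y_def ..
    have s1: "(L *\<^sub>v v) \<bullet> (L *\<^sub>v v) \<le> (Lam *\<^sub>v y) \<bullet> (Lam *\<^sub>v y) / h1"
      unfolding LvS using conjunct2[OF SS(3)[OF Ly]] .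
    have s2: "(Lam *\<^sub>v y) \<bullet> (Lam *\<^sub>v y) \<le> lmax\<^sup>2 * (y \<bullet> y)"
    proof -
      have "(Lam *\<^sub>v y) \<bullet> (Lam *\<^sub>v y) = (\<Sum>k\<in>{0..<p}. (Lam $$ (k,k))\<^sup>2 * (y $ k)\<^sup>2)" by (rule diag_norm[OF Lam y])
      also have "\<dots> \<le> (\<Sum>k\<in>{0..<p}. lmax\<^sup>2 * (y $ k)\<^sup>2)"
      proof (rule sum_mono)
        fix k assume "k \<in> {0..<p}"
        hence "lmin \<le> Lam $$ (k,k)" "Lam $$ (k,k) \<le> lmax" using lb by auto
        hence "(Lam $$ (k,k))\<^sup>2 \<le> lmax\<^sup>2" using lmin by (intro power_mono) auto
        thus "(Lam $$ (k,k))\<^sup>2 * (y $ k)\<^sup>2 \<le> lmax\<^sup>2 * (y $ k)\<^sup>2" by (intro mult_right_mono) auto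
      qed
      also have "\<dots> = lmax\<^sup>2 * (y \<bullet> y)" unfolding sp_self_sum[OF y] by (simp add: sum_distrib_left)
      finally show ?thesis .
    qed
    have s3: "y \<bullet> y \<le> v \<bullet> v / h1" using conjunct2[OF SS(3)[OF v]] unfolding y_def .
    have "(L *\<^sub>v v) \<bullet> (L *\<^sub>v v) \<le> lmax\<^sup>2 * (y \<bullet> y) / h1"
      using s1 divide_right_mono[OF s2 less_imp_le[OF h1]] by linarith
    also have "\<dots> \<le> lmax\<^sup>2 * (v \<bullet> v / h1) / h1"
      by (intro divide_right_mono mult_left_mono s3) (use h1 in auto)
    also have "\<dots> = ((lmax / h1) * nrm v)\<^sup>2"
    proof -
      have "((lmax / h1) * nrm v)\<^sup>2 = (lmax / h1)\<^sup>2 * (nrm v)\<^sup>2" by (rule power_mult_distrib)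
      also have "(nrm v)\<^sup>2 = v \<bullet> v" by (rule nrm_sq)
      finally show ?thesis using h1 by (auto simp: power2_eq_square field_simps)
    qed
    finally have "(nrm (L *\<^sub>v v))\<^sup>2 \<le> ((lmax / h1) * nrm v)\<^sup>2" unfolding nrm_sq .
    thus ?thesis by (rule power2_le_imp_le) (use nrm_ge0[of v] lmax h1 in auto)
  qed
  define ZZ where "ZZ = transpose_mat Z * Z"
  define r where "r = Matrix.row Z i"
  have r: "r \<in> carrier_vec p" unfolding r_def using Z i by (intro carrier_vecI) auto
  have ZZc: "ZZ \<in> carrier_mat p p" unfolding ZZ_def using Z by simp
  have ro: "row_outer Z i = outer r r" unfolding r_def by (rule row_outer_eq[OF Z i])
  have roc: "row_outer Z i \<in> carrier_mat p p" unfolding ro using r by simp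
  define Bi where "Bi = (1 / real n) \<cdot>\<^sub>m (ZZ - row_outer Z i)"
  have Bic: "Bi \<in> carrier_mat p p" unfolding Bi_def using roc by simp
  have BiT: "transpose_mat Bi = Bi" unfolding Bi_def ZZ_def ro using Z r
    by (intro eq_matI) (auto simp: outer_def comm_scalar_prod[of _ n])
  have Biq: "v \<bullet> (Bi *\<^sub>v v) \<ge> 0" if v: "v \<in> carrier_vec p" for v
  proof -
    define z where "z = Z *\<^sub>v v"
    have z: "z \<in> carrier_vec n" unfolding z_def using Z v by simp
    have "v \<bullet> (ZZ *\<^sub>v v) = z \<bullet> z" unfolding ZZ_def z_def
      using transpose_vec_mult_scalar[OF Z v, of "Z *\<^sub>v v"] Z v
      by (simp add: comm_scalar_prod[of v p])
    moreover have "v \<bullet> (row_outer Z i *\<^sub>v v) = (z $ i)\<^sup>2" unfolding ro outer_mult_vec[OF r r v]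
      using v r i Z unfolding z_def r_def by (simp add: power2_eq_square comm_scalar_prod[of v p])
    moreover have "z \<bullet> z \<ge> (z $ i)\<^sup>2" unfolding sp_self_sum[OF z]
      by (rule member_le_sum[of i "{0..<n}" "\<lambda>k. (z $ k)\<^sup>2", simplified]) (use i in auto)
    moreover have "v \<bullet> (Bi *\<^sub>v v) = (1 / real n) * (v \<bullet> (ZZ *\<^sub>v v) - v \<bullet> (row_outer Z i *\<^sub>v v))"
      unfolding Bi_def smult_mat_vec[OF minus_carrier_mat[OF roc] v] minus_mult_distrib_mat_vec[OF ZZc roc v]
      using ZZc roc v by (simp add: scalar_prod_minus_distrib[of _ p])
    ultimately show ?thesis using n by simp
  qed
  define u where "u = sqrt (1 / real n) \<cdot>\<^sub>v r"
  have u: "u \<in> carrier_vec p" unfolding u_def using r by simp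
  have uu: "outer u u = (1 / real n) \<cdot>\<^sub>m row_outer Z i"
  proof -
    have sq: "sqrt (1 / real n) * sqrt (1 / real n) = 1 / real n" using n by simp
    have e: "sqrt (1 / real n) * x * (sqrt (1 / real n) * y) = 1 / real n * (x * y)" for x y
    proof -
      have "sqrt (1 / real n) * x * (sqrt (1 / real n) * y) = (sqrt (1 / real n) * sqrt (1 / real n)) * (x * y)"
        by (simp only: mult_ac)
      thus ?thesis unfolding sq .
    qed
    show ?thesis unfolding ro u_def outer_def
      by (intro eq_matI) (auto simp: e)
  qed
  define A where "A = (1 / real n) \<cdot>\<^sub>m ZZ + L"
  define Ai where "Ai = A - (1 / real n) \<cdot>\<^sub>m row_outer Z i"
  have e1: "Ai = Bi + L" unfolding Ai_def A_def Bi_def using ZZc roc Lc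
    by (intro eq_matI) (auto simp: algebra_simps)
  have e2: "A = Ai + outer u u" unfolding Ai_def uu A_def using ZZc roc Lc
    by (intro eq_matI) (auto simp: algebra_simps)
  have e3: "(1 / real n) \<cdot>\<^sub>m ZZ = Bi + outer u u" unfolding uu Bi_def using ZZc roc
    by (intro eq_matI) (auto simp: algebra_simps)
  have cpos: "lmin / h2 > 0" using lmin h2 by simp
  have Cnn: "lmax / h1 \<ge> 0" using lmax h1 by simp
  have "\<bar>mtrace (minv Ai * minv Ai * Bi) - mtrace (minv A * minv A * ((1 / real n) \<cdot>\<^sub>m ZZ))\<bar>
      \<le> 1 / (lmin / h2) + 2 * (lmax / h1) / (lmin / h2)\<^sup>2"
    by (rule key_bound[OF Bic BiT Biq Lc LT Lq Ln cpos Cnn u e1 e2 e3])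
  thus ?thesis unfolding Ai_def A_def Bi_def ZZ_def L_def S_def .
qed

definition maxexpr :: "nat \<Rightarrow> real mat \<Rightarrow> real mat \<Rightarrow> real mat \<Rightarrow> real" where
  "maxexpr n Z Sig Lam = (let S = inv_sqrt_mat Sig;
         A = (1 / real n) \<cdot>\<^sub>m (transpose_mat Z * Z) + S * Lam * S;
         Mm = minv A
     in MAX i \<in> {..<n}.
          (1 / real n) * \<bar>mtrace (minv (A - (1 / real n) \<cdot>\<^sub>m row_outer Z i)
                                  * minv (A - (1 / real n) \<cdot>\<^sub>m row_outer Z i)
                                  * ((1 / real n) \<cdot>\<^sub>m (transpose_mat Z * Z - row_outer Z i)))
                         - mtrace (Mm * Mm * ((1 / real n) \<cdot>\<^sub>m (transpose_mat Z * Z)))\<bar>)"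

lemma max_bound:
  fixes Z Sig Lam :: "real mat"
  assumes n: "n > 0" and Z: "Z \<in> carrier_mat n p"
    and Sig: "Sig \<in> carrier_mat p p" "transpose_mat Sig = Sig" and h1: "h1 > 0" and h2: "h2 > 0"
    and ev: "\<And>e. eigenvalue Sig e \<Longrightarrow> h1 \<le> e \<and> e \<le> h2"
    and Lam: "Lam \<in> carrier_mat p p" "diagonal_mat Lam"
    and lb: "\<And>a. a < p \<Longrightarrow> lmin \<le> Lam $$ (a,a) \<and> Lam $$ (a,a) \<le> lmax" and lmin: "lmin > 0" and lmax: "lmax \<ge> 0"
  shows "0 \<le> maxexpr n Z Sig Lam \<and> maxexpr n Z Sig Lam \<le> (1 / (lmin / h2) + 2 * (lmax / h1) / (lmin / h2)\<^sup>2) / real n"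
proof -
  define Kc where "Kc = 1 / (lmin / h2) + 2 * (lmax / h1) / (lmin / h2)\<^sup>2"
  define f where "f = (\<lambda>i. (1 / real n) * \<bar>mtrace (minv ((1 / real n) \<cdot>\<^sub>m (transpose_mat Z * Z) + inv_sqrt_mat Sig * Lam * inv_sqrt_mat Sig - (1 / real n) \<cdot>\<^sub>m row_outer Z i)
              * minv ((1 / real n) \<cdot>\<^sub>m (transpose_mat Z * Z) + inv_sqrt_mat Sig * Lam * inv_sqrt_mat Sig - (1 / real n) \<cdot>\<^sub>m row_outer Z i)
              * ((1 / real n) \<cdot>\<^sub>m (transpose_mat Z * Z - row_outer Z i)))
         - mtrace (minv ((1 / real n) \<cdot>\<^sub>m (transpose_mat Z * Z) + inv_sqrt_mat Sig * Lam * inv_sqrt_mat Sig)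
              * minv ((1 / real n) \<cdot>\<^sub>m (transpose_mat Z * Z) + inv_sqrt_mat Sig * Lam * inv_sqrt_mat Sig)
              * ((1 / real n) \<cdot>\<^sub>m (transpose_mat Z * Z)))\<bar>)"
  have me: "maxexpr n Z Sig Lam = (MAX i \<in> {..<n}. f i)" unfolding maxexpr_def f_def Let_def ..
  have fb: "f i \<le> Kc / real n" if i: "i < n" for i
  proof -
    have "f i = (1 / real n) * \<bar>mtrace (minv ((1 / real n) \<cdot>\<^sub>m (transpose_mat Z * Z) + inv_sqrt_mat Sig * Lam * inv_sqrt_mat Sig - (1 / real n) \<cdot>\<^sub>m row_outer Z i)
              * minv ((1 / real n) \<cdot>\<^sub>m (transpose_mat Z * Z) + inv_sqrt_mat Sig * Lam * inv_sqrt_mat Sig - (1 / real n) \<cdot>\<^sub>m row_outer Z i)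
              * ((1 / real n) \<cdot>\<^sub>m (transpose_mat Z * Z - row_outer Z i)))
         - mtrace (minv ((1 / real n) \<cdot>\<^sub>m (transpose_mat Z * Z) + inv_sqrt_mat Sig * Lam * inv_sqrt_mat Sig)
              * minv ((1 / real n) \<cdot>\<^sub>m (transpose_mat Z * Z) + inv_sqrt_mat Sig * Lam * inv_sqrt_mat Sig)
              * ((1 / real n) \<cdot>\<^sub>m (transpose_mat Z * Z)))\<bar>" unfolding f_def ..
    also have "\<dots> \<le> (1 / real n) * Kc" unfolding Kc_def
    proof (rule mult_left_mono)
      show "(0::real) \<le> 1 / real n" by (simp add: divide_nonneg_nonneg)
    qed (rule bound_n[OF n Z Sig h1 h2 _ Lam _ lmin lmax i], use ev lb in auto)
    finally show ?thesis by simp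
  qed
  have fin: "finite (f ` {..<n})" "f ` {..<n} \<noteq> {}" using n by auto
  have "maxexpr n Z Sig Lam \<le> Kc / real n" unfolding me
    by (rule Max.boundedI[OF fin]) (use fb in auto)
  moreover have "0 \<le> maxexpr n Z Sig Lam"
  proof -
    have "0 \<le> f 0" unfolding f_def by simp
    also have "f 0 \<le> (MAX i \<in> {..<n}. f i)" by (rule Max_ge[OF fin(1)]) (use n in auto)
    finally show ?thesis unfolding me .
  qed
  ultimately show ?thesis unfolding Kc_def by simp
qed

theorem lemma5:
  fixes M :: "'w measure"
    and X :: "nat \<Rightarrow> nat \<Rightarrow> nat \<Rightarrow> 'w \<Rightarrow> real"
    and p :: "nat \<Rightarrow> nat" and K :: nat
    and G :: "nat \<Rightarrow> nat \<Rightarrow> nat set"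
    and \<gamma> :: "nat \<Rightarrow> real"
    and \<Sigma> :: "nat \<Rightarrow> real mat"
    and lam :: "nat \<Rightarrow> real"
    and h1 h2 \<eta> C :: real
  assumes "prob_space M"
    (* groups: K fixed disjoint groups partitioning the p(n) features *)
    and "\<And>n. (\<Union>g<K. G n g) = {..<p n}"
    and "\<And>n g g'. g < K \<Longrightarrow> g' < K \<Longrightarrow> g \<noteq> g' \<Longrightarrow> G n g \<inter> G n g' = {}"
    and "\<And>g. g < K \<Longrightarrow> (\<lambda>n. real (card (G n g)) / real n) \<longlonglongrightarrow> \<gamma> g"
    and "\<And>g. g < K \<Longrightarrow> \<gamma> g > 0"
    (* entries: for each n, the n*p(n) entries are i.i.d., mean 0, variance 1 *)
    and "\<And>n i j. i < n \<Longrightarrow> j < p n \<Longrightarrow> X n i j \<in> borel_measurable M"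
    and "\<And>n. prob_space.indep_vars M (\<lambda>_. borel) (\<lambda>(i, j). X n i j) ({..<n} \<times> {..<p n})"
    and "\<And>n i j i' j'. i < n \<Longrightarrow> j < p n \<Longrightarrow> i' < n \<Longrightarrow> j' < p n \<Longrightarrow>
           distr M borel (X n i j) = distr M borel (X n i' j')"
    and "\<And>n i j. i < n \<Longrightarrow> j < p n \<Longrightarrow> integrable M (X n i j)"
    and "\<And>n i j. i < n \<Longrightarrow> j < p n \<Longrightarrow> prob_space.expectation M (X n i j) = 0"
    and "\<And>n i j. i < n \<Longrightarrow> j < p n \<Longrightarrow> integrable M (\<lambda>\<omega>. (X n i j \<omega>)\<^sup>2)"
    and "\<And>n i j. i < n \<Longrightarrow> j < p n \<Longrightarrow> prob_space.expectation M (\<lambda>\<omega>. (X n i j \<omega>)\<^sup>2) = 1"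
    (* uniformly bounded (8+eta)-th moments *)
    and "\<eta> > 0"
    and "\<And>n i j. i < n \<Longrightarrow> j < p n \<Longrightarrow> integrable M (\<lambda>\<omega>. \<bar>X n i j \<omega>\<bar> powr (8 + \<eta>))"
    and "\<And>n i j. i < n \<Longrightarrow> j < p n \<Longrightarrow>
           prob_space.expectation M (\<lambda>\<omega>. \<bar>X n i j \<omega>\<bar> powr (8 + \<eta>)) \<le> C"
    (* covariance matrix: symmetric, eigenvalues in [h1, h2] *)
    and "h1 > 0" and "h2 > 0"
    and "\<And>n. \<Sigma> n \<in> carrier_mat (p n) (p n)"
    and "\<And>n. sym_mat (\<Sigma> n)"
    and "\<And>n e. eigenvalue (\<Sigma> n) e \<Longrightarrow> h1 \<le> e \<and> e \<le> h2"
    (* fixed penalties lambda in (0, infinity)^K *)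
    and "\<And>g. g < K \<Longrightarrow> lam g > 0"
  shows "AE \<omega> in M. (\<lambda>n.
     let Z = data_mat n (p n) (\<lambda>i j. X n i j \<omega>);
         S = inv_sqrt_mat (\<Sigma> n);
         A = (1 / real n) \<cdot>\<^sub>m (transpose_mat Z * Z) + S * Lambda_mat (p n) K (G n) lam * S;
         Mm = minv A
     in MAX i \<in> {..<n}.
          (1 / real n) * \<bar>mtrace (minv (A - (1 / real n) \<cdot>\<^sub>m row_outer Z i)
                                  * minv (A - (1 / real n) \<cdot>\<^sub>m row_outer Z i)
                                  * ((1 / real n) \<cdot>\<^sub>m (transpose_mat Z * Z - row_outer Z i)))
                         - mtrace (Mm * Mm * ((1 / real n) \<cdot>\<^sub>m (transpose_mat Z * Z)))\<bar>)
     \<longlonglongrightarrow> 0"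
proof -
  note asm = assms
  define lmin where "lmin = Min (insert 1 (lam ` {..<K}))"
  define lmax where "lmax = Max (insert 1 (lam ` {..<K}))"
  have finL: "finite (insert 1 (lam ` {..<K}))" by simp
  have lmin: "lmin > 0" unfolding lmin_def using finL assms(21) by (subst Min_gr_iff) auto
  have lmax: "lmax \<ge> 0" unfolding lmax_def using finL by (meson Max_ge insertI1 order_trans zero_le_one)
  have lamb: "lmin \<le> lam g \<and> lam g \<le> lmax" if "g < K" for g
    unfolding lmin_def lmax_def using finL that by (auto intro: Min_le Max_ge)
  have Lamb: "lmin \<le> Lambda_mat (p n) K (G n) lam $$ (a,a) \<and> Lambda_mat (p n) K (G n) lam $$ (a,a) \<le> lmax"
    if a: "a < p n" for n a
  proof -
    from a assms(2)[of n] obtain g0 where g0: "g0 < K" "a \<in> G n g0" by auto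
    have "(\<Sum>g<K. if a \<in> G n g then lam g else 0) = (\<Sum>g<K. if g = g0 then lam g else 0)"
    proof (rule sum.cong[OF refl])
      fix g assume "g \<in> {..<K}"
      hence "g < K" by simp
      hence "a \<in> G n g \<longleftrightarrow> g = g0" using assms(3)[of g0 g n] assms(3)[of g g0 n] g0 by blast
      thus "(if a \<in> G n g then lam g else 0) = (if g = g0 then lam g else 0)" by simp
    qed
    also have "\<dots> = lam g0" using g0 by simp
    finally have "Lambda_mat (p n) K (G n) lam $$ (a,a) = lam g0" unfolding Lambda_mat_def using a by simp
    thus ?thesis using lamb[OF g0(1)] by simp
  qed
  have LamC: "Lambda_mat (p n) K (G n) lam \<in> carrier_mat (p n) (p n)" for n unfolding Lambda_mat_def by simp
  have LamD: "diagonal_mat (Lambda_mat (p n) K (G n) lam)" for n unfolding Lambda_mat_def diagonal_mat_def by simp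
  have SigT: "transpose_mat (\<Sigma> n) = \<Sigma> n" for n using assms(19) unfolding sym_mat_def by simp
  define Kc where "Kc = 1 / (lmin / h2) + 2 * (lmax / h1) / (lmin / h2)\<^sup>2"
  show ?thesis
  proof (rule AE_I2)
    fix \<omega> assume "\<omega> \<in> space M"
    define F where "F = (\<lambda>n. maxexpr n (data_mat n (p n) (\<lambda>i j. X n i j \<omega>)) (\<Sigma> n) (Lambda_mat (p n) K (G n) lam))"
    have b: "0 \<le> F n \<and> F n \<le> Kc / real n" if n: "n > 0" for n
      unfolding F_def Kc_def
      by (rule max_bound[OF n _ assms(18) SigT assms(16,17) assms(20) LamC LamD Lamb lmin lmax])
         (simp add: data_mat_def)
    have "F \<longlonglongrightarrow> 0"
    proof (rule real_tendsto_sandwich[where f = "\<lambda>_. 0" and h = "\<lambda>n. Kc / real n"])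
      show "\<forall>\<^sub>F n in sequentially. 0 \<le> F n"
        by (rule eventually_mono[OF eventually_gt_at_top[of 0]]) (use b in auto)
      show "\<forall>\<^sub>F n in sequentially. F n \<le> Kc / real n"
        by (rule eventually_mono[OF eventually_gt_at_top[of 0]]) (use b in auto)
      show "(\<lambda>_. 0) \<longlonglongrightarrow> (0::real)" by simp
      show "(\<lambda>n. Kc / real n) \<longlonglongrightarrow> 0"
        using tendsto_mult_right_zero[OF lim_inverse_n', of Kc] by simp
    qed
    thus "(\<lambda>n. let Z = data_mat n (p n) (\<lambda>i j. X n i j \<omega>);
         S = inv_sqrt_mat (\<Sigma> n);
         A = (1 / real n) \<cdot>\<^sub>m (transpose_mat Z * Z) + S * Lambda_mat (p n) K (G n) lam * S;
         Mm = minv A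
     in MAX i \<in> {..<n}.
          (1 / real n) * \<bar>mtrace (minv (A - (1 / real n) \<cdot>\<^sub>m row_outer Z i)
                                  * minv (A - (1 / real n) \<cdot>\<^sub>m row_outer Z i)
                                  * ((1 / real n) \<cdot>\<^sub>m (transpose_mat Z * Z - row_outer Z i)))
                         - mtrace (Mm * Mm * ((1 / real n) \<cdot>\<^sub>m (transpose_mat Z * Z)))\<bar>)
     \<longlonglongrightarrow> 0" unfolding F_def maxexpr_def Let_def .
  qed
qed

end
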